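(* Consider the partial-order process prior described in the context with covariate effects set to zero. Fix any actor $j\in\mathcal{M}$, and for a time series $h=(h^{(t)})_{t=B}^E\in\mathcal{H}^{(B,E)}$ let $h_{-j}=(h^{(t)}[\mathcal{M}_t\setminus\{j\}])_{t=B}^E$ be the time series of suborders obtained by deleting $j$. Let $\pi_{\mathcal{H}^{(B,E)}}(\cdot\mid\beta=0)$ denote the marginal law of $h$ generated from the actor set $\mathcal{M}$, and let $\pi_{\mathcal{H}^{(B,E)}_{-j}}(\cdot\mid\beta=0)$ denote the marginal law of the time series of partial orders generated by the same model from the actor set $\mathcal{M}\setminus\{j\}$ (i.e. using only the latent processes $U_{j'}$, $j'\neq j$, with active sets $\mathcal{M}_t\setminus\{j\}$). Then for every $g\in\mathcal{H}^{(B,E)}_{-j}$, \[ \pi_{\mathcal{H}^{(B,E)}_{-j}}(g\mid\beta=0)=\sum_{h\in\mathcal{H}^{(B,E)}}\mathbb{I}_{g=h_{-j}}\,\pi_{\mathcal{H}^{(B,E)}}(h\mid\beta=0). \]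
   Context: A (strict) partial order on a finite set $A$ is a set $H\subseteq A\times A$ of pairs $(i,j)$ (read "$i\succ j$") that is irreflexive, acyclic and transitively closed; $\mathcal{H}_A$ denotes the set of all partial orders on $A$. For $O\subseteq A$ the suborder is $H[O]=\{(j_1,j_2)\in H:\{j_1,j_2\}\subseteq O\}$. Setting: integer times $t\in[B,E]=\{B,B+1,\dots,E\}$; a finite set of actors $\mathcal{M}$; each actor $j$ has a known activity interval $[b_j,e_j]\subseteq[B,E]$; $\mathcal{M}_t=\{j\in\mathcal{M}:b_j\le t\le e_j\}$. Let $\mathcal{H}^{(B,E)}=\mathcal{H}_{\mathcal{M}_B}\times\cdots\times\mathcal{H}_{\mathcal{M}_E}$ and $\mathcal{H}^{(B,E)}_{-j}=\mathcal{H}_{\mathcal{M}_B\setminus\{j\}}\times\cdots\times\mathcal{H}_{\mathcal{M}_E\setminus\{j\}}$. Prior (with zero covariate effects): fix an integer $K\ge1$ and $\gamma>0$. Draw $\rho\sim\mathrm{Beta}(1,\gamma)$ and $\theta\sim\mathrm{Unif}(0,1)$. Let $\Sigma^{(\rho)}$ be the $K\times K$ matrix with diagonal entries $1$ and off-diagonal entries $\rho$. Independently for each $j\in\mathcal{M}$, generate a process $U_j=(U_j^{(t)})_{t=b_j}^{e_j}$ in $\mathbb{R}^K$ by $U_j^{(b_j)}\sim N(0_K,\Sigma^{(\rho)}/(1-\theta^2))$ and $U_j^{(t)}=\theta U_j^{(t-1)}+\epsilon_j^{(t)}$ for $t=b_j+1,\dots,e_j$ with $\epsilon_j^{(t)}\sim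 N(0_K,\Sigma^{(\rho)})$ i.i.d. Set $Z_j^{(t)}=U_j^{(t)}$ and, for each $t$, define the partial order \[ h^{(t)}=\{(i,j)\in\mathcal{M}_t\times\mathcal{M}_t: Z^{(t)}_{i,k}>Z^{(t)}_{j,k}\text{ for all }k=1,\dots,K\}. \] The time series $h=(h^{(t)})_{t=B}^E\in\mathcal{H}^{(B,E)}$ has marginal law $\pi_{\mathcal{H}^{(B,E)}}(h\mid\beta=0)$, obtained by integrating over $U$, $\rho$ and $\theta$. *)

theory Defs
  imports "HOL-Analysis.Analysis" "HOL-Probability.Probability"
begin

definition partial_orders :: "'a set \<Rightarrow> ('a \<times> 'a) set set" where
  "partial_orders A = {H. H \<subseteq> A \<times> A \<and> irrefl H \<and> acyclic H \<and> trans H}"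

definition suborder :: "('a \<times> 'a) set \<Rightarrow> 'a set \<Rightarrow> ('a \<times> 'a) set" where
  "suborder H O' = {(j1, j2) \<in> H. j1 \<in> O' \<and> j2 \<in> O'}"

definition active :: "'a set \<Rightarrow> ('a \<Rightarrow> int) \<Rightarrow> ('a \<Rightarrow> int) \<Rightarrow> int \<Rightarrow> 'a set" where
  "active M b e t = {j \<in> M. b j \<le> t \<and> t \<le> e j}"

definition HBE :: "'a set \<Rightarrow> ('a \<Rightarrow> int) \<Rightarrow> ('a \<Rightarrow> int) \<Rightarrow> int \<Rightarrow> int
    \<Rightarrow> (int \<Rightarrow> ('a \<times> 'a) set) set" where
  "HBE M b e B E = {h. (\<forall>t \<in> {B..E}. h t \<in> partial_orders (active M b e t))
                        \<and> (\<forall>t. t \<notin> {B..E} \<longrightarrow> h t = {})}"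

definition delete_actor :: "'a set \<Rightarrow> ('a \<Rightarrow> int) \<Rightarrow> ('a \<Rightarrow> int) \<Rightarrow> int \<Rightarrow> int \<Rightarrow> 'a
    \<Rightarrow> (int \<Rightarrow> ('a \<times> 'a) set) \<Rightarrow> (int \<Rightarrow> ('a \<times> 'a) set)" where
  "delete_actor M b e B E j h =
     (\<lambda>t. if t \<in> {B..E} then suborder (h t) (active M b e t - {j}) else {})"

definition beta_density :: "real \<Rightarrow> real \<Rightarrow> real \<Rightarrow> real" where
  "beta_density a b x =
     (if 0 < x \<and> x < 1 then x powr (a - 1) * (1 - x) powr (b - 1) / Beta a b else 0)"

definition beta_measure :: "real \<Rightarrow> real \<Rightarrow> real measure" where
  "beta_measure a b = density lborel (\<lambda>x. ennreal (beta_density a b x))"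

definition unif01 :: "real measure" where
  "unif01 = uniform_measure lborel {0<..<1}"

definition mvn_density :: "real^'k^'k \<Rightarrow> real^'k \<Rightarrow> real" where
  "mvn_density S x =
     exp (- (x \<bullet> (matrix_inv S *v x)) / 2) / sqrt ((2 * pi) ^ CARD('k) * det S)"

definition mvn :: "real^'k^'k \<Rightarrow> (real^'k) measure" where
  "mvn S = density lborel (\<lambda>x. ennreal (mvn_density S x))"

definition Sigma_rho :: "real \<Rightarrow> real^'k^'k" where
  "Sigma_rho \<rho> = (\<chi> i k. if i = k then 1 else \<rho>)"

text \<open>Innovations of actor j: x(b_j) = U^(b_j) ~ N(0, Sigma/(1-theta^2)),
  x(t) = eps^(t) ~ N(0, Sigma) for t = b_j+1..e_j, all independent.\<close>
definition actor_innov :: "real \<Rightarrow> real \<Rightarrow> int \<Rightarrow> int \<Rightarrow> (int \<Rightarrow> real^'k) measure" where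
  "actor_innov \<rho> \<theta> bj ej =
     PiM {bj..ej} (\<lambda>t. if t = bj then mvn ((1 / (1 - \<theta>\<^sup>2)) *\<^sub>R Sigma_rho \<rho>)
                                 else mvn (Sigma_rho \<rho>))"

text \<open>ar theta bj x n = U^(bj + n), with U^(bj) = x bj, U^(t) = theta U^(t-1) + x t.\<close>
fun ar :: "real \<Rightarrow> int \<Rightarrow> (int \<Rightarrow> real^'k) \<Rightarrow> nat \<Rightarrow> real^'k" where
  "ar \<theta> bj x 0 = x bj"
| "ar \<theta> bj x (Suc n) = \<theta> *\<^sub>R ar \<theta> bj x n + x (bj + int (Suc n))"

definition latent_U :: "real \<Rightarrow> ('a \<Rightarrow> int) \<Rightarrow> ('a \<Rightarrow> int \<Rightarrow> real^'k) \<Rightarrow> 'a \<Rightarrow> int \<Rightarrow> real^'k" where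
  "latent_U \<theta> b x j t = ar \<theta> (b j) (x j) (nat (t - b j))"

definition latent_measure :: "'a set \<Rightarrow> ('a \<Rightarrow> int) \<Rightarrow> ('a \<Rightarrow> int) \<Rightarrow> real \<Rightarrow> real
    \<Rightarrow> ('a \<Rightarrow> int \<Rightarrow> real^'k) measure" where
  "latent_measure M b e \<rho> \<theta> = PiM M (\<lambda>j. actor_innov \<rho> \<theta> (b j) (e j))"

text \<open>The partial-order time series induced by Z = U (zero covariate effects).\<close>
definition po_series :: "'a set \<Rightarrow> ('a \<Rightarrow> int) \<Rightarrow> ('a \<Rightarrow> int) \<Rightarrow> int \<Rightarrow> int \<Rightarrow> real
    \<Rightarrow> ('a \<Rightarrow> int \<Rightarrow> real^'k) \<Rightarrow> (int \<Rightarrow> ('a \<times> 'a) set)" where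
  "po_series M b e B E \<theta> x =
     (\<lambda>t. if t \<in> {B..E} then
             {(i, i'). i \<in> active M b e t \<and> i' \<in> active M b e t \<and>
                (\<forall>k. latent_U \<theta> b x i t $ k > latent_U \<theta> b x i' t $ k)}
          else {})"

definition prior_prob :: "'k::finite itself \<Rightarrow> 'a set \<Rightarrow> ('a \<Rightarrow> int) \<Rightarrow> ('a \<Rightarrow> int) \<Rightarrow> int \<Rightarrow> int
    \<Rightarrow> real \<Rightarrow> (int \<Rightarrow> ('a \<times> 'a) set) \<Rightarrow> real" where
  "prior_prob K M b e B E \<gamma> h =
     (\<integral>\<rho>. (\<integral>\<theta>.
        measure (latent_measure M b e \<rho> \<theta> :: ('a \<Rightarrow> int \<Rightarrow> real^'k) measure)
          {x \<in> space (latent_measure M b e \<rho> \<theta>). po_series M b e B E \<theta> x = h}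
      \<partial>unif01) \<partial>beta_measure 1 \<gamma>)"

end

theory Submission
  imports Defs
begin


lemma Sigma_rho_nth[simp]: "Sigma_rho \<rho> $ i $ k = (if i = k then 1 else \<rho>)"
  by (simp add: Sigma_rho_def)

definition Sinv :: "real \<Rightarrow> real^'k::finite^'k" where
  "Sinv \<rho> = (\<chi> i k. (if i = k then 1/(1-\<rho>) else 0) - \<rho>/((1-\<rho>)*(1-\<rho>+real CARD('k)*\<rho>)))"

lemma Sinv_nth[simp]: "(Sinv \<rho> :: real^'k::finite^'k) $ i $ k =
   (if i = k then 1/(1-\<rho>) else 0) - \<rho>/((1-\<rho>)*(1-\<rho>+real CARD('k)*\<rho>))"
  by (simp add: Sinv_def)

lemma sum_if_eq_l: "(\<Sum>l\<in>UNIV. (if i = l then a else b) * f l) = a * f i + b * (\<Sum>l\<in>UNIV-{i}. f l)"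
  for f :: "'k::finite \<Rightarrow> real"
proof -
  have "(\<Sum>l\<in>UNIV. (if i = l then a else b) * f l) = (if i = i then a else b) * f i + (\<Sum>l\<in>UNIV-{i}. (if i = l then a else b) * f l)"
    by (subst sum.remove[of _ i]) auto
  also have "(\<Sum>l\<in>UNIV-{i}. (if i = l then a else b) * f l) = b * (\<Sum>l\<in>UNIV-{i}. f l)"
    by (auto simp: sum_distrib_left intro!: sum.cong)
  finally show ?thesis by simp
qed

lemma Sigma_Sinv:
  assumes "\<rho> \<noteq> 1" "1 - \<rho> + real CARD('k) * \<rho> \<noteq> 0"
  shows "Sigma_rho \<rho> ** (Sinv \<rho> :: real^'k::finite^'k) = mat 1"
proof -
  let ?K = "real CARD('k)"
  let ?v = "\<rho>/((1-\<rho>)*(1-\<rho>+?K*\<rho>))"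
  have "(\<Sum>l\<in>UNIV. (if i = l then 1 else \<rho>) * ((if l = k then 1/(1-\<rho>) else 0) - ?v)) = (if i = k then 1 else 0)" for i k :: 'k
  proof -
    have s1: "(\<Sum>l\<in>UNIV-{i}. ((if l = k then 1/(1-\<rho>) else 0) - ?v)) = (if i = k then 0 else 1/(1-\<rho>)) - (?K - 1) * ?v"
      by (simp add: sum_subtractf card_Diff_singleton of_nat_diff)
    have n1: "1 - \<rho> \<noteq> 0" using assms by simp
    have n2: "(1-\<rho>)*(1-\<rho>+?K*\<rho>) \<noteq> 0" using assms by simp
    have gen: "1 * ((if i = k then u else 0) - v) + \<rho> * ((if i = k then 0 else u) - (K - 1) * v) = (if i = k then 1 else 0)"
      if hu: "u * (1-\<rho>) = 1" and hv: "v * (1-\<rho>+K*\<rho>) = \<rho> * u" for u v K :: real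
    proof -
      have "u - v * (1-\<rho>+K*\<rho>) = 1" using hu hv by (simp add: algebra_simps)
      moreover have "\<rho>*u - v * (1-\<rho>+K*\<rho>) = 0" using hv by simp
      ultimately show ?thesis by (auto simp: algebra_simps)
    qed
    show ?thesis
      unfolding sum_if_eq_l s1 by (rule gen) (use n1 n2 in \<open>simp_all add: field_simps\<close>)
  qed
  then show ?thesis by (simp add: matrix_matrix_mult_def mat_def vec_eq_iff)
qed

lemma Sinv_Sigma:
  assumes "\<rho> \<noteq> 1" "1 - \<rho> + real CARD('k) * \<rho> \<noteq> 0"
  shows "(Sinv \<rho> :: real^'k::finite^'k) ** Sigma_rho \<rho> = mat 1"
proof -
  have "transpose (Sinv \<rho> :: real^'k::finite^'k) = Sinv \<rho>" "transpose (Sigma_rho \<rho> :: real^'k::finite^'k) = Sigma_rho \<rho>"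
    by (auto simp: transpose_def vec_eq_iff)
  then show ?thesis using Sigma_Sinv[OF assms] matrix_transpose_mul[of "Sigma_rho \<rho>" "Sinv \<rho>"]
    by (metis transpose_mat)
qed

lemma matrix_inv_eqI:
  fixes A B :: "'a::semiring_1^'n::finite^'n"
  assumes "A ** B = mat 1" "B ** A = mat 1"
  shows "matrix_inv A = B"
proof -
  have ex: "\<exists>A'. A ** A' = mat 1 \<and> A' ** A = mat 1" using assms by blast
  have "A ** matrix_inv A = mat 1 \<and> matrix_inv A ** A = mat 1"
    unfolding matrix_inv_def using someI_ex[OF ex] .
  then have "matrix_inv A = matrix_inv A ** (A ** B)" using assms by simp
  also have "\<dots> = (matrix_inv A ** A) ** B" by (simp add: matrix_mul_assoc)
  also have "\<dots> = B" using \<open>A ** matrix_inv A = mat 1 \<and> matrix_inv A ** A = mat 1\<close> by simp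
  finally show ?thesis .
qed

lemma matrix_inv_Sigma:
  assumes "\<rho> \<noteq> 1" "1 - \<rho> + real CARD('k) * \<rho> \<noteq> 0" "s \<noteq> 0"
  shows "matrix_inv (s *\<^sub>R Sigma_rho \<rho> :: real^'k::finite^'k) = (1/s) *\<^sub>R Sinv \<rho>"
  apply (rule matrix_inv_eqI)
  using Sigma_Sinv[OF assms(1,2)] Sinv_Sigma[OF assms(1,2)] assms(3)
  by (simp_all add: matrix_scalar_ac)



lemma det_row_except:
  fixes v :: "real^'n::finite"
  shows "det ((\<chi> k. if k = i0 then v else axis k 1) :: real^'n^'n) = v $ i0"
proof -
  let ?A = "(\<chi> k. if k = i0 then v $ i0 *s axis i0 1 else axis k 1) :: real^'n^'n"
  let ?x = "\<Sum>j\<in>UNIV-{i0}. v $ j *s axis j (1::real)"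
  have rowA: "row j ?A = (if j = i0 then v $ i0 *s axis i0 1 else axis j 1)" for j
    by (simp add: row_def vec_eq_iff)
  have "?x \<in> vec.span {row j ?A |j. j \<noteq> i0}"
  proof (rule vec.span_sum)
    fix j assume "j \<in> UNIV - {i0}"
    then have "axis j 1 = row j ?A" "j \<noteq> i0" using rowA[of j] by auto
    then have "axis j 1 \<in> {row j ?A |j. j \<noteq> i0}" by blast
    then show "v $ j *s axis j 1 \<in> vec.span {row j ?A |j. j \<noteq> i0}"
      by (intro vec.span_scale vec.span_base)
  qed
  from det_row_span[OF this]
  have eq1: "det (\<chi> k. if k = i0 then row i0 ?A + ?x else row k ?A) = det ?A" .
  have "row i0 ?A + ?x = v"
  proof -
    have "v = (\<Sum>j\<in>UNIV. v $ j *s axis j (1::real))"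
    proof -
      have "(\<Sum>j\<in>UNIV. v $ j * (axis j (1::real)) $ i) = v $ i" for i
      proof -
        have "(\<Sum>j\<in>UNIV. v $ j * (axis j (1::real)) $ i) = (\<Sum>j\<in>UNIV. if j = i then v $ j else 0)"
          by (rule sum.cong) (auto simp: axis_def)
        then show ?thesis by simp
      qed
      then show ?thesis by (simp add: vec_eq_iff sum_component)
    qed
    also have "\<dots> = v $ i0 *s axis i0 1 + ?x"
      by (subst sum.remove[of _ i0]) auto
    finally show ?thesis using rowA[of i0] by simp
  qed
  then have eq2: "(\<chi> k. if k = i0 then row i0 ?A + ?x else row k ?A) = (\<chi> k. if k = i0 then v else axis k 1)"
    by (simp add: rowA vec_eq_iff)
  have "det ?A = v $ i0"
  proof -
    have "det ?A = v $ i0 * det ((\<chi> k. if k = i0 then axis i0 1 else axis k 1) :: real^'n^'n)"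
      by (rule det_row_mul[of i0 "v$i0" "\<lambda>k. axis i0 1" "\<lambda>k. axis k 1"])
    also have "((\<chi> k. if k = i0 then axis i0 1 else axis k 1) :: real^'n^'n) = mat 1"
      by (simp add: vec_eq_iff mat_def axis_def)
    finally show ?thesis by simp
  qed
  then show ?thesis using eq1 eq2 by simp
qed

lemma det_col_except:
  fixes v :: "real^'n::finite"
  shows "det ((\<chi> k l. if l = i0 then v $ k else if k = l then 1 else 0) :: real^'n^'n) = v $ i0"
proof -
  have "transpose ((\<chi> k l. if l = i0 then v $ k else if k = l then 1 else 0) :: real^'n^'n)
        = (\<chi> k. if k = i0 then v else axis k 1)" (is "?L = ?R")
  proof -
    have "?L $ i $ j = ?R $ i $ j" for i j
      by (cases "i = i0") (simp_all add: transpose_def axis_def)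
    then show ?thesis by (simp add: vec_eq_iff)
  qed
  then have "det (transpose ((\<chi> k l. if l = i0 then v $ k else if k = l then 1 else 0) :: real^'n^'n)) = v $ i0"
    using det_row_except[of i0 v] by simp
  then show ?thesis by (simp only: det_transpose)
qed



lemma det_Sigma_rho:
  assumes r1: "\<rho> \<noteq> 1"
  shows "det (Sigma_rho \<rho> :: real^'k::finite^'k) = (1-\<rho>)^(CARD('k)-1) * (1 + (real CARD('k) - 1)*\<rho>)"
proof -
  obtain i0 :: 'k where True by blast
  let ?K = "real CARD('k)"
  define vR :: "real^'k" where "vR = (\<chi> l. if l = i0 then 1+(?K-1)*\<rho> else -1)"
  define vE :: "real^'k" where "vE = (\<chi> l. if l = i0 then 1 else \<rho>)"
  define vG :: "real^'k" where "vG = (\<chi> l. if l = i0 then 1 else 1/(1-\<rho>))"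
  define Rm where "Rm = ((\<chi> k. if k = i0 then vR else axis k 1) :: real^'k^'k)"
  define Em where "Em = ((\<chi> k l. if l = i0 then vE $ k else if k = l then 1 else 0) :: real^'k^'k)"
  define Gm where "Gm = ((\<chi> k. if k = i0 then vG else axis k 1) :: real^'k^'k)"
  define Dm where "Dm = ((\<chi> k l. if k = l then (if k = i0 then 1 else 1-\<rho>) else 0) :: real^'k^'k)"
  have dR: "det Rm = 1+(?K-1)*\<rho>" unfolding Rm_def by (simp add: det_row_except vR_def)
  have dE: "det Em = 1" unfolding Em_def by (simp add: det_col_except vE_def)
  have dG: "det Gm = 1" unfolding Gm_def by (simp add: det_row_except vG_def)
  have dD: "det Dm = (1-\<rho>)^(CARD('k)-1)"
  proof -
    have "det Dm = (\<Prod>i\<in>UNIV. Dm $ i $ i)" by (rule det_diagonal) (simp add: Dm_def)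
    also have "\<dots> = (\<Prod>i\<in>UNIV. if i = i0 then 1 else 1-\<rho>)" by (simp add: Dm_def)
    also have "\<dots> = (\<Prod>i\<in>UNIV-{i0}. 1-\<rho>)"
      by (subst prod.remove[of _ i0]) (auto intro!: prod.cong)
    also have "\<dots> = (1-\<rho>)^(CARD('k)-1)" by (simp add: card_Diff_singleton)
    finally show ?thesis .
  qed
  have n1: "1 - \<rho> \<noteq> 0" using r1 by simp
  define F where "F = Gm ** Dm"
  have F: "F $ k $ l = (if k = i0 then 1 else if k = l then 1-\<rho> else 0)" for k l
  proof -
    have "F $ k $ l = (\<Sum>m\<in>UNIV. Gm $ k $ m * Dm $ m $ l)" by (simp add: F_def matrix_matrix_mult_def)
    also have "\<dots> = (\<Sum>m\<in>UNIV. if m = l then Gm $ k $ l * Dm $ l $ l else 0)"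
      by (rule sum.cong) (auto simp: Dm_def)
    also have "\<dots> = Gm $ k $ l * Dm $ l $ l" by simp
    also have "\<dots> = (if k = i0 then 1 else if k = l then 1-\<rho> else 0)"
      using n1 by (auto simp: Gm_def Dm_def vG_def axis_def)
    finally show ?thesis .
  qed
  define Bm where "Bm = Em ** F"
  have Bm: "Bm $ k $ l = (if k = i0 then 1 else (if k = l then 1-\<rho> else 0) + \<rho>)" for k l
  proof -
    have "Bm $ k $ l = (\<Sum>m\<in>UNIV. Em $ k $ m * F $ m $ l)" by (simp add: Bm_def matrix_matrix_mult_def)
    also have "\<dots> = Em $ k $ i0 * F $ i0 $ l + (\<Sum>m\<in>UNIV-{i0}. Em $ k $ m * F $ m $ l)"
      by (subst sum.remove[of _ i0]) auto
    also have "(\<Sum>m\<in>UNIV-{i0}. Em $ k $ m * F $ m $ l) = (\<Sum>m\<in>UNIV-{i0}. if m = k then F $ k $ l else 0)"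
      by (rule sum.cong) (auto simp: Em_def)
    also have "\<dots> = (if k = i0 then 0 else F $ k $ l)" by simp
    finally show ?thesis by (auto simp: Em_def vE_def F)
  qed
  have Sig: "Sigma_rho \<rho> = Rm ** Bm"
  proof -
    have "(Rm ** Bm) $ k $ l = Sigma_rho \<rho> $ k $ l" for k l
    proof -
      have "(Rm ** Bm) $ k $ l = (\<Sum>m\<in>UNIV. Rm $ k $ m * Bm $ m $ l)" by (simp add: matrix_matrix_mult_def)
      also have "\<dots> = Rm $ k $ i0 * Bm $ i0 $ l + (\<Sum>m\<in>UNIV-{i0}. Rm $ k $ m * Bm $ m $ l)"
        by (subst sum.remove[of _ i0]) auto
      also have "\<dots> = Sigma_rho \<rho> $ k $ l"
      proof (cases "k = i0")
        case True
        have "(\<Sum>m\<in>UNIV-{i0}. Rm $ k $ m * Bm $ m $ l) = (\<Sum>m\<in>UNIV-{i0}. - ((if m = l then 1-\<rho> else 0) + \<rho>))"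
          by (rule sum.cong) (auto simp: Rm_def vR_def True Bm)
        also have "\<dots> = - ((if l = i0 then 0 else 1-\<rho>) + (?K-1)*\<rho>)"
        proof -
          have h1: "(\<Sum>m\<in>UNIV-{i0}. (if m = l then 1-\<rho> else 0)) = (if l = i0 then 0 else 1-\<rho>)"
            by (simp add: sum.delta)
          have "(\<Sum>m\<in>UNIV-{i0}. - ((if m = l then 1-\<rho> else 0) + \<rho>)) = - ((\<Sum>m\<in>UNIV-{i0}. (if m = l then 1-\<rho> else 0)) + (\<Sum>m\<in>UNIV-{i0}. \<rho>))"
            by (simp only: sum_negf sum.distrib)
          also have "(\<Sum>m\<in>UNIV-{i0}. \<rho>) = (?K-1)*\<rho>" by (simp add: card_Diff_singleton of_nat_diff)
          finally show ?thesis by (simp only: h1)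
        qed
        finally show ?thesis using True by (auto simp: Rm_def vR_def Bm algebra_simps)
      next
        case False
        have "(\<Sum>m\<in>UNIV-{i0}. Rm $ k $ m * Bm $ m $ l) = (\<Sum>m\<in>UNIV-{i0}. if m = k then Bm $ k $ l else 0)"
          by (rule sum.cong) (auto simp: Rm_def axis_def False)
        also have "\<dots> = Bm $ k $ l" using False by simp
        finally show ?thesis using False by (auto simp: Rm_def axis_def Bm)
      qed
      finally show ?thesis .
    qed
    then show ?thesis by (simp add: vec_eq_iff)
  qed
  have "det (Sigma_rho \<rho> :: real^'k^'k) = det Rm * (det Em * (det Gm * det Dm))"
    unfolding Sig Bm_def F_def det_mul ..
  then show ?thesis using dR dE dG dD by simp
qed



lemma gauss1:
  assumes a: "a > 0"
  shows "(\<integral>\<^sup>+ t. ennreal (exp (-(a*t\<^sup>2)/2 + b*t)) \<partial>lborel) = ennreal (sqrt(2*pi/a) * exp(b\<^sup>2/(2*a)))"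
proof -
  let ?\<sigma> = "1 / sqrt a"
  have s: "?\<sigma> > 0" using a by simp
  have eq: "exp (-(a*t\<^sup>2)/2 + b*t) = (sqrt(2*pi/a) * exp(b\<^sup>2/(2*a))) * normal_density (b/a) ?\<sigma> t" for t
  proof -
    have "normal_density (b/a) ?\<sigma> t = 1 / sqrt (2*pi/a) * exp (-(t - b/a)\<^sup>2 * a / 2)"
      using a by (simp add: normal_density_def power_divide real_sqrt_divide)
    moreover have "exp (-(a*t\<^sup>2)/2 + b*t) = exp(b\<^sup>2/(2*a)) * exp (-(t - b/a)\<^sup>2 * a / 2)"
    proof -
      have "-(a*t\<^sup>2)/2 + b*t = b\<^sup>2/(2*a) + (-(t - b/a)\<^sup>2 * a / 2)"
        using a by (simp add: field_simps power2_eq_square)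
      then have "exp (-(a*t\<^sup>2)/2 + b*t) = exp (b\<^sup>2/(2*a) + (-(t - b/a)\<^sup>2 * a / 2))" by (simp only:)
      then show ?thesis by (simp only: exp_add)
    qed
    moreover have "sqrt (2*pi/a) > 0" using a by simp
    ultimately show ?thesis using a by simp
  qed
  have "(\<integral>\<^sup>+ t. ennreal (exp (-(a*t\<^sup>2)/2 + b*t)) \<partial>lborel)
      = (\<integral>\<^sup>+ t. ennreal (sqrt(2*pi/a) * exp(b\<^sup>2/(2*a))) * ennreal (normal_density (b/a) ?\<sigma> t) \<partial>lborel)"
    apply (rule nn_integral_cong)
    apply (subst eq)
    apply (rule ennreal_mult)
    using a by auto
  also have "\<dots> = ennreal (sqrt(2*pi/a) * exp(b\<^sup>2/(2*a))) * (\<integral>\<^sup>+ t. ennreal (normal_density (b/a) ?\<sigma> t) \<partial>lborel)"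
    by (rule nn_integral_cmult) simp
  also have "(\<integral>\<^sup>+ t. ennreal (normal_density (b/a) ?\<sigma> t) \<partial>lborel) = 1"
    using s by (subst nn_integral_eq_integral) (auto simp: normal_density_nonneg)
  finally show ?thesis by simp
qed

lemma nn_integral_vec_prod:
  fixes f :: "'n::finite \<Rightarrow> real \<Rightarrow> ennreal"
  assumes [measurable]: "\<And>i. f i \<in> borel_measurable borel"
  shows "(\<integral>\<^sup>+ y. (\<Prod>i\<in>UNIV. f i (y $ i)) \<partial>(lborel :: (real^'n) measure)) = (\<Prod>i\<in>UNIV. \<integral>\<^sup>+ x. f i x \<partial>lborel)"
proof -
  define idx :: "real^'n \<Rightarrow> 'n" where "idx b = (SOME i. axis i 1 = b)" for b
  have idx: "idx (axis i 1) = i" for i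
    unfolding idx_def by (rule some_equality) (auto simp: axis_eq_axis)
  define g where "g b = f (idx b)" for b
  have B: "(Basis :: (real^'n) set) = (\<lambda>i. axis i 1) ` UNIV"
    by (auto simp: Basis_vec_def)
  have inj: "inj_on (\<lambda>i::'n. axis i (1::real)) UNIV"
    by (auto simp: inj_on_def axis_eq_axis)
  have "(\<Prod>i\<in>UNIV. f i (y $ i)) = (\<Prod>b\<in>Basis. g b (y \<bullet> b))" for y :: "real^'n"
    unfolding B prod.reindex[OF inj] by (simp add: g_def idx inner_axis o_def)
  moreover have "(\<Prod>i\<in>UNIV. \<integral>\<^sup>+ x. f i x \<partial>lborel) = (\<Prod>b\<in>Basis. \<integral>\<^sup>+ x. g b x \<partial>lborel)"
    unfolding B prod.reindex[OF inj] by (simp add: g_def idx o_def)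
  moreover have "(\<integral>\<^sup>+ y. (\<Prod>b\<in>Basis. g b (y \<bullet> b)) \<partial>(lborel :: (real^'n) measure)) = (\<Prod>b\<in>Basis. \<integral>\<^sup>+ x. g b x \<partial>lborel)"
    by (rule nn_integral_lborel_prod) (auto simp: g_def)
  ultimately show ?thesis by simp
qed



lemma borel_measurable_vec_nth[measurable (raw)]:
  fixes f :: "'a \<Rightarrow> 'b::real_normed_vector^'n::finite"
  assumes "f \<in> borel_measurable M"
  shows "(\<lambda>x. f x $ i) \<in> borel_measurable M"
  by (rule borel_measurable_continuous_on[OF _ assms])
     (intro linear_continuous_on bounded_linear_vec_nth)

lemma ennreal_mult3: "0 \<le> x \<Longrightarrow> 0 \<le> y \<Longrightarrow> 0 \<le> z \<Longrightarrow> ennreal x * (ennreal y * ennreal z) = ennreal (x*(y*z))"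
  by (simp add: ennreal_mult)

lemma gaussK:
  fixes a \<beta> :: real
  assumes a: "a > 0" and b: "\<beta> \<ge> 0" and Kb: "real CARD('n::finite) * \<beta> < 1"
  shows "(\<integral>\<^sup>+ (y::real^'n). ennreal (exp (-(a * ((\<Sum>i\<in>UNIV. (y$i)\<^sup>2) - \<beta> * (\<Sum>i\<in>UNIV. y$i)\<^sup>2))/2)) \<partial>lborel)
       = ennreal (sqrt(2*pi/a)^CARD('n) / sqrt(1 - real CARD('n) * \<beta>))"
proof -
  let ?K = "real CARD('n)"
  define c where "c = sqrt (a * \<beta>)"
  have c2: "c\<^sup>2 = a * \<beta>" using a b by (simp add: c_def)
  define q where "q y = (\<Sum>i\<in>UNIV. (y$i)\<^sup>2)" for y :: "real^'n"
  define sm where "sm y = (\<Sum>i\<in>UNIV. y$i)" for y :: "real^'n"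
  define h where "h y w = exp(-(w\<^sup>2)/2 + c*w* sm y - a * q y/2)" for y :: "real^'n" and w :: real
  have [measurable]: "q \<in> borel_measurable borel" "sm \<in> borel_measurable borel"
    unfolding q_def sm_def by measurable
  have hm[measurable]: "(\<lambda>(y,w). ennreal (h y w)) \<in> borel_measurable (lborel \<Otimes>\<^sub>M lborel)"
    unfolding h_def by measurable
  have inner_w: "(\<integral>\<^sup>+ w. ennreal (h y w) \<partial>lborel) = ennreal (sqrt(2*pi) * exp(-(a * (q y - \<beta> * (sm y)\<^sup>2))/2))" for y
  proof -
    have "(\<integral>\<^sup>+ w. ennreal (h y w) \<partial>lborel) = (\<integral>\<^sup>+ w. ennreal (exp(- a * q y/2)) * ennreal (exp (-(1*w\<^sup>2)/2 + (c * sm y)*w)) \<partial>lborel)"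
      apply (rule nn_integral_cong)
      apply (subst ennreal_mult[symmetric])
        apply simp apply simp
      apply (simp add: h_def exp_add[symmetric] algebra_simps)
      done
    also have "\<dots> = ennreal (exp(- a * q y/2)) * (\<integral>\<^sup>+ w. ennreal (exp (-(1*w\<^sup>2)/2 + (c * sm y)*w)) \<partial>lborel)"
      by (rule nn_integral_cmult) simp
    also have "\<dots> = ennreal (exp(- a * q y/2)) * ennreal (sqrt(2*pi/1) * exp((c * sm y)\<^sup>2/(2*1)))"
      by (subst gauss1) simp_all
    also have "\<dots> = ennreal (exp(- a * q y/2) * (sqrt(2*pi) * exp((c * sm y)\<^sup>2/2)))"
      by (subst ennreal_mult[symmetric]) simp_all
    also have "exp(- a * q y/2) * (sqrt(2*pi) * exp((c * sm y)\<^sup>2/2)) = sqrt(2*pi) * exp(-(a * (q y - \<beta> * (sm y)\<^sup>2))/2)"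
    proof -
      have "- a * q y/2 + (c * sm y)\<^sup>2/2 = -(a * (q y - \<beta> * (sm y)\<^sup>2))/2"
        by (simp add: power_mult_distrib c2 algebra_simps)
      then have "exp(- a * q y/2) * exp((c * sm y)\<^sup>2/2) = exp(-(a * (q y - \<beta> * (sm y)\<^sup>2))/2)"
        by (simp only: exp_add[symmetric])
      then show ?thesis by (simp add: algebra_simps)
    qed
    finally show ?thesis .
  qed
  have inner_y: "(\<integral>\<^sup>+ y. ennreal (h y w) \<partial>lborel) = ennreal (sqrt(2*pi/a)^CARD('n) * exp(-((1 - ?K*\<beta>)*w\<^sup>2)/2))" for w
  proof -
    have hp: "ennreal (h y w) = ennreal (exp(-(w\<^sup>2)/2)) * (\<Prod>i\<in>UNIV. ennreal (exp (-(a*(y$i)\<^sup>2)/2 + (c*w)*(y$i))))" for y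
    proof -
      have "(\<Prod>i\<in>UNIV. ennreal (exp (-(a*(y$i)\<^sup>2)/2 + (c*w)*(y$i)))) = ennreal (\<Prod>i\<in>UNIV. exp (-(a*(y$i)\<^sup>2)/2 + (c*w)*(y$i)))"
        by (simp add: prod_ennreal)
      also have "(\<Prod>i\<in>UNIV. exp (-(a*(y$i)\<^sup>2)/2 + (c*w)*(y$i))) = exp (\<Sum>i\<in>UNIV. (-(a*(y$i)\<^sup>2)/2 + (c*w)*(y$i)))"
        by (simp add: exp_sum)
      also have "(\<Sum>i\<in>UNIV. (-(a*(y$i)\<^sup>2)/2 + (c*w)*(y$i))) = - a * q y / 2 + c * w * sm y"
      proof -
        have "(\<Sum>i\<in>UNIV. (-(a*(y$i)\<^sup>2)/2 + (c*w)*(y$i))) = (\<Sum>i\<in>UNIV. -(a*(y$i)\<^sup>2)/2) + (\<Sum>i\<in>UNIV. (c*w)*(y$i))"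
          by (rule sum.distrib)
        moreover have "(\<Sum>i\<in>UNIV. -(a*(y$i)\<^sup>2)/2) = - a * q y / 2"
          unfolding q_def sum_divide_distrib[symmetric] by (simp add: sum_negf sum_distrib_left)
        moreover have "(\<Sum>i\<in>UNIV. (c*w)*(y$i)) = c * w * sm y"
          unfolding sm_def sum_distrib_left[symmetric] by simp
        ultimately show ?thesis by simp
      qed
      finally have "(\<Prod>i\<in>UNIV. ennreal (exp (-(a*(y$i)\<^sup>2)/2 + (c*w)*(y$i)))) = ennreal (exp (- a * q y / 2 + c * w * sm y))" .
      moreover have "h y w = exp(-(w\<^sup>2)/2) * exp (- a * q y / 2 + c * w * sm y)"
        by (simp add: h_def exp_add[symmetric] algebra_simps)
      ultimately show ?thesis by (simp add: ennreal_mult)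
    qed
    have "(\<integral>\<^sup>+ y. ennreal (h y w) \<partial>lborel) = ennreal (exp(-(w\<^sup>2)/2)) * (\<integral>\<^sup>+ (y::real^'n). (\<Prod>i\<in>UNIV. ennreal (exp (-(a*(y$i)\<^sup>2)/2 + (c*w)*(y$i)))) \<partial>lborel)"
      by (simp only: hp nn_integral_cmult[symmetric]) (rule nn_integral_cmult; measurable)
    also have "(\<integral>\<^sup>+ (y::real^'n). (\<Prod>i\<in>UNIV. ennreal (exp (-(a*(y$i)\<^sup>2)/2 + (c*w)*(y$i)))) \<partial>lborel)
        = (\<Prod>i\<in>(UNIV::'n set). \<integral>\<^sup>+ t. ennreal (exp (-(a*t\<^sup>2)/2 + (c*w)*t)) \<partial>lborel)"
      by (rule nn_integral_vec_prod[where f="\<lambda>i t. ennreal (exp (-(a*t\<^sup>2)/2 + (c*w)*t))"]) measurable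
    also have "\<dots> = (\<Prod>i\<in>(UNIV::'n set). ennreal (sqrt(2*pi/a) * exp((c*w)\<^sup>2/(2*a))))"
      by (simp only: gauss1[OF a])
    also have "\<dots> = ennreal ((sqrt(2*pi/a) * exp((c*w)\<^sup>2/(2*a)))^CARD('n))"
      using a by (simp add: ennreal_power)
    also have "ennreal (exp(-(w\<^sup>2)/2)) * \<dots> = ennreal (exp(-(w\<^sup>2)/2) * (sqrt(2*pi/a) * exp((c*w)\<^sup>2/(2*a)))^CARD('n))"
      by (rule ennreal_mult[symmetric]) (use a in auto)
    also have "exp(-(w\<^sup>2)/2) * (sqrt(2*pi/a) * exp((c*w)\<^sup>2/(2*a)))^CARD('n) = sqrt(2*pi/a)^CARD('n) * exp(-((1 - ?K*\<beta>)*w\<^sup>2)/2)"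
    proof -
      have "exp((c*w)\<^sup>2/(2*a))^CARD('n) = exp(?K * ((c*w)\<^sup>2/(2*a)))"
        by (simp add: exp_of_nat_mult[symmetric])
      also have "?K * ((c*w)\<^sup>2/(2*a)) = ?K * \<beta> * w\<^sup>2 / 2"
        using a by (simp add: power_mult_distrib c2)
      finally have e1: "exp((c*w)\<^sup>2/(2*a))^CARD('n) = exp(?K * \<beta> * w\<^sup>2 / 2)" .
      have e2: "exp(-(w\<^sup>2)/2) * exp(?K * \<beta> * w\<^sup>2 / 2) = exp(-((1 - ?K*\<beta>)*w\<^sup>2)/2)"
        by (simp add: exp_add[symmetric] algebra_simps add_divide_distrib[symmetric])
      show ?thesis unfolding power_mult_distrib[of "sqrt(2*pi/a)" "exp((c*w)\<^sup>2/(2*a))"] e1 e2[symmetric] by (rule mult.left_commute)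
    qed
    finally show ?thesis .
  qed
  have "(\<integral>\<^sup>+ (y::real^'n). ennreal (exp (-(a * ((\<Sum>i\<in>UNIV. (y$i)\<^sup>2) - \<beta> * (\<Sum>i\<in>UNIV. y$i)\<^sup>2))/2)) \<partial>lborel)
      = (\<integral>\<^sup>+ (y::real^'n). ennreal (1 / sqrt(2*pi)) * (\<integral>\<^sup>+ w. ennreal (h y w) \<partial>lborel) \<partial>lborel)"
  proof (rule nn_integral_cong)
    fix y :: "real^'n"
    show "ennreal (exp (-(a * ((\<Sum>i\<in>UNIV. (y$i)\<^sup>2) - \<beta> * (\<Sum>i\<in>UNIV. y$i)\<^sup>2))/2)) = ennreal (1 / sqrt(2*pi)) * (\<integral>\<^sup>+ w. ennreal (h y w) \<partial>lborel)"
      unfolding inner_w by (simp add: ennreal_mult[symmetric] q_def sm_def)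
  qed
  also have "\<dots> = ennreal (1 / sqrt(2*pi)) * (\<integral>\<^sup>+ (y::real^'n). (\<integral>\<^sup>+ w. ennreal (h y w) \<partial>lborel) \<partial>lborel)"
    by (rule nn_integral_cmult) measurable
  also have "(\<integral>\<^sup>+ (y::real^'n). (\<integral>\<^sup>+ w. ennreal (h y w) \<partial>lborel) \<partial>lborel) = (\<integral>\<^sup>+ w. (\<integral>\<^sup>+ (y::real^'n). ennreal (h y w) \<partial>lborel) \<partial>lborel)"
    using lborel_pair.Fubini[OF hm] by simp
  also have "\<dots> = (\<integral>\<^sup>+ w. ennreal (sqrt(2*pi/a)^CARD('n)) * ennreal (exp(-((1 - ?K*\<beta>)*w\<^sup>2)/2 + 0 * w)) \<partial>lborel)"
    unfolding inner_y by (rule nn_integral_cong) (simp, rule ennreal_mult, use a in auto)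
  also have "\<dots> = ennreal (sqrt(2*pi/a)^CARD('n)) * (\<integral>\<^sup>+ w. ennreal (exp(-((1 - ?K*\<beta>)*w\<^sup>2)/2 + 0 * w)) \<partial>lborel)"
    by (rule nn_integral_cmult) simp
  also have "(\<integral>\<^sup>+ w. ennreal (exp(-((1 - ?K*\<beta>)*w\<^sup>2)/2 + 0 * w)) \<partial>lborel) = ennreal (sqrt(2*pi/(1 - ?K*\<beta>)) * exp(0\<^sup>2/(2*(1 - ?K*\<beta>))))"
    by (rule gauss1) (use Kb in simp)
  also have "ennreal (1 / sqrt(2*pi)) * (ennreal (sqrt(2*pi/a)^CARD('n)) * ennreal (sqrt(2*pi/(1 - ?K*\<beta>)) * exp(0\<^sup>2/(2*(1 - ?K*\<beta>)))))
     = ennreal (sqrt(2*pi/a)^CARD('n) / sqrt(1 - ?K * \<beta>))"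
  proof -
    have "1 / sqrt(2*pi) * (sqrt(2*pi/a)^CARD('n) * (sqrt(2*pi/(1 - ?K*\<beta>)) * exp(0\<^sup>2/(2*(1 - ?K*\<beta>)))))
        = sqrt(2*pi/a)^CARD('n) / sqrt(1 - ?K * \<beta>)"
      using Kb by (simp add: real_sqrt_divide field_simps)
    moreover have "ennreal (1 / sqrt(2*pi)) * (ennreal (sqrt(2*pi/a)^CARD('n)) * ennreal (sqrt(2*pi/(1 - ?K*\<beta>)) * exp(0\<^sup>2/(2*(1 - ?K*\<beta>)))))
      = ennreal (1 / sqrt(2*pi) * (sqrt(2*pi/a)^CARD('n) * (sqrt(2*pi/(1 - ?K*\<beta>)) * exp(0\<^sup>2/(2*(1 - ?K*\<beta>))))))"
      by (rule ennreal_mult3) (use a Kb in auto)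
    ultimately show ?thesis by simp
  qed
  finally show ?thesis .
qed



lemma det_scaleR_mat: "det (s *\<^sub>R A :: real^'n::finite^'n) = s ^ CARD('n) * det A"
proof -
  have "s *\<^sub>R A = (s *\<^sub>R mat 1) ** A" by (simp add: scalar_matrix_assoc[symmetric])
  moreover have "det (s *\<^sub>R mat 1 :: real^'n^'n) = s ^ CARD('n)"
  proof -
    have "det (s *\<^sub>R mat 1 :: real^'n^'n) = (\<Prod>i\<in>UNIV. (s *\<^sub>R mat 1 :: real^'n^'n) $ i $ i)"
      by (rule det_diagonal) (simp add: mat_def)
    then show ?thesis by (simp add: mat_def)
  qed
  ultimately show ?thesis by (simp add: det_mul)
qed

lemma continuous_on_mat_vec: "continuous_on UNIV (\<lambda>y::real^'n::finite. (M::real^'n^'m::finite) *v y)"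
  by (rule linear_continuous_on) (simp add: linear_conv_bounded_linear[symmetric])

lemma borel_measurable_quadform[measurable]: "(\<lambda>y::real^'n::finite. y \<bullet> ((M::real^'n^'n) *v y)) \<in> borel_measurable borel"
  by (rule borel_measurable_continuous_onI) (intro continuous_intros continuous_on_mat_vec)

lemma borel_measurable_mvn_density[measurable]: "mvn_density S \<in> borel_measurable borel"
  unfolding mvn_density_def by measurable

lemma alg_aux: "1/x * (A - r/d*B) = A/x - r/(x*d)*B" for x A r d B :: real
  by (simp add: algebra_simps divide_inverse)

lemma quad_Sinv:
  "(y::real^'k::finite) \<bullet> (Sinv \<rho> *v y) = (1/(1-\<rho>)) * ((\<Sum>i\<in>UNIV. (y$i)\<^sup>2) - \<rho>/(1-\<rho>+real CARD('k)*\<rho>) * (\<Sum>i\<in>UNIV. y$i)\<^sup>2)"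
proof -
  let ?v = "\<rho>/((1-\<rho>)*(1-\<rho>+real CARD('k)*\<rho>))"
  have mv: "(Sinv \<rho> *v y) $ i = y $ i / (1-\<rho>) - ?v * (\<Sum>k\<in>UNIV. y$k)" for i
  proof -
    have "(Sinv \<rho> *v y) $ i = (\<Sum>k\<in>UNIV. ((if i = k then 1/(1-\<rho>) else 0) - ?v) * y $ k)"
      by (simp add: matrix_vector_mult_def)
    also have "\<dots> = (\<Sum>k\<in>UNIV. (if i = k then y $ k/(1-\<rho>) else 0) - ?v * y $ k)"
      by (rule sum.cong) (auto simp: left_diff_distrib)
    also have "\<dots> = (\<Sum>k\<in>UNIV. (if i = k then y $ k/(1-\<rho>) else 0)) - (\<Sum>k\<in>UNIV. ?v * y $ k)"
      by (rule sum_subtractf)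
    also have "\<dots> = y $ i / (1-\<rho>) - ?v * (\<Sum>k\<in>UNIV. y$k)"
      by (simp add: sum_distrib_left)
    finally show ?thesis .
  qed
  have "y \<bullet> (Sinv \<rho> *v y) = (\<Sum>i\<in>UNIV. y $ i * (y $ i / (1-\<rho>) - ?v * (\<Sum>k\<in>UNIV. y$k)))"
    by (simp add: inner_vec_def mv)
  also have "\<dots> = (\<Sum>i\<in>UNIV. (y$i)\<^sup>2) / (1-\<rho>) - ?v * (\<Sum>i\<in>UNIV. y$i)\<^sup>2"
    by (simp add: right_diff_distrib sum_subtractf sum_divide_distrib power2_eq_square
        sum_distrib_left sum_distrib_right algebra_simps)
  also have "\<dots> = (1/(1-\<rho>)) * ((\<Sum>i\<in>UNIV. (y$i)\<^sup>2) - \<rho>/(1-\<rho>+real CARD('k)*\<rho>) * (\<Sum>i\<in>UNIV. y$i)\<^sup>2)"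
    by (simp only: alg_aux)
  finally show ?thesis .
qed

lemma mvn_Sigma_prob:
  assumes s: "s > 0" and r: "0 < \<rho>" "\<rho> < 1"
  shows "prob_space (mvn (s *\<^sub>R Sigma_rho \<rho> :: real^'k::finite^'k))"
proof
  let ?K = "real CARD('k)"
  let ?S = "s *\<^sub>R Sigma_rho \<rho> :: real^'k::finite^'k"
  define \<beta> where "\<beta> = \<rho>/(1-\<rho>+?K*\<rho>)"
  define a where "a = 1/(s*(1-\<rho>))"
  have K1: "CARD('k) \<ge> 1" by (simp add: Suc_le_eq)
  have Kp: "?K \<ge> 1" using K1 by simp
  have d: "1-\<rho>+?K*\<rho> > 0" using r Kp by (smt (verit) mult_nonneg_nonneg)
  have a0: "a > 0" using s r by (simp add: a_def)
  have b0: "\<beta> \<ge> 0" using r d by (simp add: \<beta>_def)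
  have Kb1: "1 - ?K * \<beta> = (1-\<rho>)/(1-\<rho>+?K*\<rho>)" using d by (simp add: \<beta>_def field_simps)
  have Kb: "?K * \<beta> < 1" using Kb1 r d by (smt (verit) divide_pos_pos)
  have minv: "matrix_inv ?S = (1/s) *\<^sub>R Sinv \<rho>"
    by (rule matrix_inv_Sigma) (use r d s in auto)
  have quad: "y \<bullet> (matrix_inv ?S *v y) = a * ((\<Sum>i\<in>UNIV. (y$i)\<^sup>2) - \<beta> * (\<Sum>i\<in>UNIV. y$i)\<^sup>2)" for y
    unfolding minv scaleR_matrix_vector_assoc[symmetric] inner_scaleR_right quad_Sinv a_def \<beta>_def
    by simp
  have detS: "det ?S = s ^ CARD('k) * ((1-\<rho>)^(CARD('k)-1) * (1-\<rho>+?K*\<rho>))"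
    unfolding det_scaleR_mat det_Sigma_rho[of \<rho>, OF order.strict_implies_not_eq[OF r(2)]]
    by (simp add: algebra_simps)
  define D where "D = sqrt ((2 * pi) ^ CARD('k) * det ?S)"
  have Dp: "D > 0" unfolding D_def detS using s r d by simp
  have "emeasure (mvn ?S) (space (mvn ?S)) = (\<integral>\<^sup>+ y. ennreal (mvn_density ?S y) \<partial>lborel)"
    by (simp add: mvn_def emeasure_density[of _ _ UNIV])
  also have "\<dots> = (\<integral>\<^sup>+ (y::real^'k). ennreal (1/D) * ennreal (exp (-(a * ((\<Sum>i\<in>UNIV. (y$i)\<^sup>2) - \<beta> * (\<Sum>i\<in>UNIV. y$i)\<^sup>2))/2)) \<partial>lborel)"
  proof (rule nn_integral_cong)
    fix y :: "real^'k"
    have md: "mvn_density ?S y = 1/D * exp (-(a * ((\<Sum>i\<in>UNIV. (y$i)\<^sup>2) - \<beta> * (\<Sum>i\<in>UNIV. y$i)\<^sup>2))/2)"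
      unfolding mvn_density_def quad D_def by simp
    show "ennreal (mvn_density ?S y) = ennreal (1/D) * ennreal (exp (-(a * ((\<Sum>i\<in>UNIV. (y$i)\<^sup>2) - \<beta> * (\<Sum>i\<in>UNIV. y$i)\<^sup>2))/2))"
      unfolding md by (rule ennreal_mult) (use Dp in auto)
  qed
  also have "\<dots> = ennreal (1/D) * (\<integral>\<^sup>+ (y::real^'k). ennreal (exp (-(a * ((\<Sum>i\<in>UNIV. (y$i)\<^sup>2) - \<beta> * (\<Sum>i\<in>UNIV. y$i)\<^sup>2))/2)) \<partial>lborel)"
    by (rule nn_integral_cmult) measurable
  also have "\<dots> = ennreal (1/D) * ennreal (sqrt(2*pi/a)^CARD('k) / sqrt(1 - ?K * \<beta>))"
    by (subst gaussK[OF a0 b0 Kb]) rule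
  also have "\<dots> = ennreal (1/D * (sqrt(2*pi/a)^CARD('k) / sqrt(1 - ?K * \<beta>)))"
    by (rule ennreal_mult[symmetric]) (use Dp Kb a0 in auto)
  also have "1/D * (sqrt(2*pi/a)^CARD('k) / sqrt(1 - ?K * \<beta>)) = 1"
  proof -
    obtain m where m: "CARD('k) = Suc m" using K1 by (cases "CARD('k)") auto
    have r1: "sqrt(2*pi/a)^CARD('k) = sqrt((2*pi/a)^CARD('k))" by (simp add: real_sqrt_power)
    have r2: "2*pi/a = 2*pi * s*(1-\<rho>)" by (simp add: a_def)
    have gen: "(P * (Q * (w * u))) / (u/dd) = P*(Q*(w*dd))" if "u \<noteq> 0" "dd \<noteq> 0" for P Q w u dd :: real
      using that by (simp add: field_simps)
    have r3: "(2*pi * s*(1-\<rho>))^CARD('k) / ((1-\<rho>)/(1-\<rho>+?K*\<rho>)) = (2*pi)^CARD('k) * det ?S"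
    proof -
      have "(2*pi * s*(1-\<rho>))^CARD('k) = (2*pi)^CARD('k) * (s^CARD('k) * ((1-\<rho>)^m * (1-\<rho>)))"
        unfolding m by (simp add: power_mult_distrib)
      then show ?thesis unfolding detS m using gen[of "1-\<rho>" "1-\<rho>+?K*\<rho>" "(2*pi)^Suc m" "s^Suc m" "(1-\<rho>)^m"] r d
        by (simp, blast)
    qed
    have "sqrt(2*pi/a)^CARD('k) / sqrt(1 - ?K * \<beta>) = D"
      unfolding r1 Kb1 real_sqrt_divide[symmetric] unfolding r2 r3 D_def ..
    then show ?thesis using Dp by simp
  qed
  finally show "emeasure (mvn ?S) (space (mvn ?S)) = 1" by simp
qed



lemma active_Diff: "active (M - {j}) b e t = active M b e t - {j}"
  by (auto simp: active_def)

lemma po_series_in_HBE: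
  "po_series M b e B E \<theta> (x :: 'a \<Rightarrow> int \<Rightarrow> real^'k::finite) \<in> HBE M b e B E"
proof -
  have "po_series M b e B E \<theta> x t \<in> partial_orders (active M b e t)" if "t \<in> {B..E}" for t
  proof -
    let ?R = "po_series M b e B E \<theta> x t"
    have R: "?R = {(i, i'). i \<in> active M b e t \<and> i' \<in> active M b e t \<and>
                (\<forall>k. latent_U \<theta> b x i t $ k > latent_U \<theta> b x i' t $ k)}"
      using that by (simp add: po_series_def)
    have tr: "trans ?R" unfolding R by (auto simp: trans_def intro: less_trans)
    have ir: "irrefl ?R" unfolding R irrefl_def by auto
    have "acyclic ?R" unfolding acyclic_def trancl_id[OF tr] using ir by (simp add: irrefl_def)
    then show ?thesis using tr ir unfolding partial_orders_def by (auto simp: R)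
  qed
  then show ?thesis by (auto simp: HBE_def po_series_def)
qed

lemma delete_po_series:
  "delete_actor M b e B E j (po_series M b e B E \<theta> x) = po_series (M - {j}) b e B E \<theta> x"
  by (auto simp: delete_actor_def po_series_def suborder_def active_Diff fun_eq_iff)

lemma finite_HBE:
  assumes "finite M"
  shows "finite (HBE M b e B E)"
proof -
  let ?f = "\<lambda>(u :: int \<Rightarrow> ('a \<times> 'a) set) t. if t \<in> {B..E} then u t else {}"
  have "HBE M b e B E \<subseteq> ?f ` (PiE {B..E} (\<lambda>_. Pow (M \<times> M)))"
  proof
    fix h assume h: "h \<in> HBE M b e B E"
    have "h = ?f (restrict h {B..E})" using h by (auto simp: HBE_def fun_eq_iff)
    moreover have "restrict h {B..E} \<in> PiE {B..E} (\<lambda>_. Pow (M \<times> M))"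
      using h by (auto simp: HBE_def partial_orders_def active_def)
    ultimately show "h \<in> ?f ` (PiE {B..E} (\<lambda>_. Pow (M \<times> M)))" by blast
  qed
  moreover have "finite (PiE {B..E} (\<lambda>_. Pow (M \<times> M)))"
    using assms by (intro finite_PiE) auto
  ultimately show ?thesis by (meson finite_surj)
qed

lemma latent_U_restrict:
  "i \<in> J \<Longrightarrow> latent_U \<theta> b (restrict x J) i t = latent_U \<theta> b x i t"
  by (simp add: latent_U_def)

lemma po_series_restrict:
  "active N b e t \<subseteq> J \<Longrightarrow> (\<And>t. active N b e t \<subseteq> J) \<Longrightarrow> po_series N b e B E \<theta> (restrict x J) = po_series N b e B E \<theta> x"
  by (auto simp: po_series_def fun_eq_iff latent_U_restrict subset_iff)

lemma po_series_eq_iff: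
  "po_series N b e B E \<theta> x = h \<longleftrightarrow>
     ((\<forall>t. t \<notin> {B..E} \<longrightarrow> h t = {}) \<and>
      (\<forall>t\<in>{B..E}. h t \<subseteq> active N b e t \<times> active N b e t \<and>
         (\<forall>i\<in>active N b e t. \<forall>i'\<in>active N b e t.
            ((i, i') \<in> h t \<longleftrightarrow> (\<forall>k\<in>UNIV. latent_U \<theta> b x i t $ k > latent_U \<theta> b x i' t $ k)))))"
  (is "?L \<longleftrightarrow> ?R")
proof
  assume ?L then show ?R by (auto simp: po_series_def)
next
  assume r: ?R
  show ?L
  proof
    fix t show "po_series N b e B E \<theta> x t = h t"
    proof (cases "t \<in> {B..E}")
      case True
      have s: "h t \<subseteq> active N b e t \<times> active N b e t" using r True by auto
      have q: "\<And>i i'. i \<in> active N b e t \<Longrightarrow> i' \<in> active N b e t \<Longrightarrow>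
          ((i, i') \<in> h t \<longleftrightarrow> (\<forall>k. latent_U \<theta> b x i t $ k > latent_U \<theta> b x i' t $ k))"
        using r True by auto
      show ?thesis
      proof (intro set_eqI iffI)
        fix p assume "p \<in> po_series N b e B E \<theta> x t"
        then show "p \<in> h t" using True q by (auto simp: po_series_def)
      next
        fix p assume p: "p \<in> h t"
        obtain i i' where pi: "p = (i, i')" by (cases p)
        then have "i \<in> active N b e t" "i' \<in> active N b e t" using s p by auto
        then show "p \<in> po_series N b e B E \<theta> x t" using True q p pi by (auto simp: po_series_def)
      qed
    next
      case False
      then have "po_series N b e B E \<theta> x t = {}" by (auto simp: po_series_def)
      moreover have "h t = {}" using r False by blast
      ultimately show ?thesis by simp
    qed
  qed
qed



lemma measurable_ar:
  fixes F :: "int \<Rightarrow> (real^'k::finite) measure"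
  assumes f: "f \<in> measurable N (PiM {bi..ei} F)" and sF: "\<And>t. sets (F t) = sets borel"
    and g: "g \<in> borel_measurable N"
  shows "int n \<le> ei - bi \<Longrightarrow> (\<lambda>z. ar (g z) bi (f z) n) \<in> borel_measurable N"
proof (induction n)
  case 0
  have "(\<lambda>z. f z bi) \<in> measurable N (F bi)"
    using 0 by (intro measurable_compose[OF f measurable_component_singleton]) auto
  then show ?case by (simp add: measurable_cong_sets[OF refl sF])
next
  case (Suc n)
  have IH: "(\<lambda>z. ar (g z) bi (f z) n) \<in> borel_measurable N" using Suc by simp
  have "(\<lambda>z. f z (bi + int (Suc n))) \<in> measurable N (F (bi + int (Suc n)))"
    using Suc.prems by (intro measurable_compose[OF f measurable_component_singleton]) auto
  then have c: "(\<lambda>z. f z (bi + int (Suc n))) \<in> borel_measurable N"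
    by (simp add: measurable_cong_sets[OF refl sF])
  show ?case
    by (simp only: ar.simps) (intro borel_measurable_add borel_measurable_scaleR g IH c)
qed

lemma measurable_latent_U:
  fixes F :: "'a \<Rightarrow> int \<Rightarrow> (real^'k::finite) measure"
  assumes xs: "xs \<in> measurable Z (PiM N (\<lambda>i. PiM {b i..e i} (F i)))"
    and sF: "\<And>i t. sets (F i t) = sets borel"
    and g: "g \<in> borel_measurable Z"
    and i: "i \<in> N" and t: "b i \<le> t" "t \<le> e i"
  shows "(\<lambda>z. latent_U (g z) b (xs z) i t) \<in> borel_measurable Z"
proof -
  have "(\<lambda>z. xs z i) \<in> measurable Z (PiM {b i..e i} (F i))"
    using i by (intro measurable_compose[OF xs measurable_component_singleton])
  from measurable_ar[OF this sF g, of "nat (t - b i)"] t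
  show ?thesis by (simp add: latent_U_def)
qed

lemma pred_po_series_eq:
  fixes F :: "'a \<Rightarrow> int \<Rightarrow> (real^'k::finite) measure"
  assumes fin: "finite N"
    and xs: "xs \<in> measurable Z (PiM N (\<lambda>i. PiM {b i..e i} (F i)))"
    and sF: "\<And>i t. sets (F i t) = sets borel"
    and g: "g \<in> borel_measurable Z"
  shows "Measurable.pred Z (\<lambda>z. po_series N b e B E (g z) (xs z) = h)"
proof -
  have U: "(\<lambda>z. latent_U (g z) b (xs z) i t $ k) \<in> borel_measurable Z"
    if "i \<in> active N b e t" for i t k
    using that by (intro borel_measurable_vec_nth measurable_latent_U[OF xs sF g]) (auto simp: active_def)
  have fa: "finite (active N b e t)" for t using fin by (simp add: active_def)
  show ?thesis
    unfolding po_series_eq_iff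
    apply (intro pred_intros_logic pred_intros_finite fa finite_atLeastAtMost_int finite_UNIV
        borel_measurable_pred_less U)
    apply (auto intro: measurable_const)
    done
qed



lemma sets_actor_F: "sets (if t = bi then mvn S1 else mvn S2 :: (real^'k::finite) measure) = sets borel"
  by (simp add: mvn_def)

lemma sets_Ev:
  assumes fin: "finite N"
  shows "{x \<in> space (latent_measure N b e \<rho> \<theta>). po_series N b e B E \<theta> x = h}
          \<in> sets (latent_measure N b e \<rho> \<theta> :: ('a \<Rightarrow> int \<Rightarrow> real^'k::finite) measure)"
proof -
  have "Measurable.pred (latent_measure N b e \<rho> \<theta> :: ('a \<Rightarrow> int \<Rightarrow> real^'k::finite) measure) (\<lambda>z. po_series N b e B E \<theta> (id z) = h)"
    unfolding latent_measure_def actor_innov_def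
    by (rule pred_po_series_eq[OF fin, where F="\<lambda>i t. if t = b i then mvn ((1 / (1 - \<theta>\<^sup>2)) *\<^sub>R Sigma_rho \<rho>) else mvn (Sigma_rho \<rho>)"])
       (auto simp: sets_actor_F)
  then show ?thesis by (simp add: pred_def)
qed

lemma fixed_identity:
  fixes \<rho> \<theta> :: real
  assumes fin: "finite M"
    and ps: "\<And>bi ei. prob_space (actor_innov \<rho> \<theta> bi ei :: (int \<Rightarrow> real^'k::finite) measure)"
  shows "measure (latent_measure (M-{j}) b e \<rho> \<theta> :: ('a \<Rightarrow> int \<Rightarrow> real^'k) measure)
            {x\<in>space (latent_measure (M-{j}) b e \<rho> \<theta>). po_series (M-{j}) b e B E \<theta> x = g}
     = (\<Sum>h\<in>HBE M b e B E. (if g = delete_actor M b e B E j h then 1 else 0) *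
          measure (latent_measure M b e \<rho> \<theta> :: ('a \<Rightarrow> int \<Rightarrow> real^'k) measure)
             {x \<in> space (latent_measure M b e \<rho> \<theta>). po_series M b e B E \<theta> x = h})"
proof -
  define Fm where "Fm = (\<lambda>i. actor_innov \<rho> \<theta> (b i) (e i) :: (int \<Rightarrow> real^'k) measure)"
  let ?J = "M - {j}"
  let ?PM = "PiM M Fm" and ?PJ = "PiM ?J Fm"
  have LM: "latent_measure M b e \<rho> \<theta> = ?PM" "latent_measure ?J b e \<rho> \<theta> = ?PJ"
    by (simp_all add: latent_measure_def Fm_def)
  interpret P: product_prob_space Fm M
    by (rule product_prob_spaceI) (simp add: Fm_def ps)
  have pm: "prob_space ?PM" by (rule prob_space_PiM) (simp add: Fm_def ps)
  then have fm: "finite_measure ?PM" unfolding prob_space_def by simp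
  define Ev where "Ev h = {x \<in> space ?PM. po_series M b e B E \<theta> x = h}" for h
  define EvJ where "EvJ = {x \<in> space ?PJ. po_series ?J b e B E \<theta> x = g}"
  have EvJ_sets: "EvJ \<in> sets ?PJ" unfolding EvJ_def LM(2)[symmetric] using fin by (intro sets_Ev) simp
  have Ev_sets: "Ev h \<in> sets ?PM" for h unfolding Ev_def LM(1)[symmetric] using fin by (intro sets_Ev)
  have dr: "?PJ = distr ?PM ?PJ (\<lambda>f. restrict f ?J)"
    by (rule P.distr_restrict) (use fin in auto)
  have "measure ?PJ EvJ = measure ?PM ((\<lambda>f. restrict f ?J) -` EvJ \<inter> space ?PM)"
    by (subst dr, rule measure_distr[OF _ EvJ_sets]) (rule measurable_restrict_subset, auto)
  also have "(\<lambda>f. restrict f ?J) -` EvJ \<inter> space ?PM = (\<Union>h\<in>{h\<in>HBE M b e B E. g = delete_actor M b e B E j h}. Ev h)"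
  proof (intro set_eqI iffI)
    fix x assume x: "x \<in> (\<lambda>f. restrict f ?J) -` EvJ \<inter> space ?PM"
    have "po_series ?J b e B E \<theta> (restrict x ?J) = po_series ?J b e B E \<theta> x"
      by (rule po_series_restrict) (auto simp: active_def)
    then have "po_series ?J b e B E \<theta> x = g" using x by (simp add: EvJ_def)
    then have "g = delete_actor M b e B E j (po_series M b e B E \<theta> x)" by (simp add: delete_po_series)
    then show "x \<in> (\<Union>h\<in>{h\<in>HBE M b e B E. g = delete_actor M b e B E j h}. Ev h)"
      using x po_series_in_HBE[of M b e B E \<theta> x] by (auto simp: Ev_def)
  next
    fix x assume "x \<in> (\<Union>h\<in>{h\<in>HBE M b e B E. g = delete_actor M b e B E j h}. Ev h)"
    then have x: "x \<in> space ?PM" and g: "g = delete_actor M b e B E j (po_series M b e B E \<theta> x)"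
      by (auto simp: Ev_def)
    have "po_series ?J b e B E \<theta> (restrict x ?J) = po_series ?J b e B E \<theta> x"
      by (rule po_series_restrict) (auto simp: active_def)
    moreover have "restrict x ?J \<in> space ?PJ" using x by (auto simp: space_PiM PiE_def Pi_def)
    ultimately show "x \<in> (\<lambda>f. restrict f ?J) -` EvJ \<inter> space ?PM"
      using x g by (simp add: EvJ_def delete_po_series)
  qed
  also have "measure ?PM (\<Union>h\<in>{h\<in>HBE M b e B E. g = delete_actor M b e B E j h}. Ev h)
      = (\<Sum>h\<in>{h\<in>HBE M b e B E. g = delete_actor M b e B E j h}. measure ?PM (Ev h))"
    by (rule finite_measure.finite_measure_finite_Union[OF fm])
       (use finite_HBE[OF fin] Ev_sets in \<open>auto simp: disjoint_family_on_def Ev_def\<close>)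
  also have "\<dots> = (\<Sum>h\<in>HBE M b e B E. (if g = delete_actor M b e B E j h then 1 else 0) * measure ?PM (Ev h))"
  proof -
    have "(\<Sum>h\<in>HBE M b e B E. (if g = delete_actor M b e B E j h then 1 else 0) * measure ?PM (Ev h))
        = (\<Sum>h\<in>HBE M b e B E. (if g = delete_actor M b e B E j h then measure ?PM (Ev h) else 0))"
      by (rule sum.cong) auto
    also have "\<dots> = (\<Sum>h\<in>{h\<in>HBE M b e B E. g = delete_actor M b e B E j h}. measure ?PM (Ev h))"
      by (rule sum.inter_filter[symmetric]) (rule finite_HBE[OF fin])
    finally show ?thesis by simp
  qed
  finally show ?thesis unfolding LM EvJ_def Ev_def .
qed



lemma borel_measurable_vec_lambda:
  fixes f :: "'n::finite \<Rightarrow> 'a \<Rightarrow> 'b::euclidean_space"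
  assumes "\<And>k. f k \<in> borel_measurable M"
  shows "(\<lambda>z. \<chi> k. f k z) \<in> borel_measurable M"
  unfolding borel_measurable_euclidean_space[where f="\<lambda>z. \<chi> k. f k z"]
proof
  fix b :: "'b^'n" assume "b \<in> Basis"
  then obtain i u where b: "b = axis i u" and u: "u \<in> Basis" by (auto simp: Basis_vec_def)
  have "(\<lambda>z. (\<chi> k. f k z) \<bullet> b) = (\<lambda>z. f i z \<bullet> u)" by (simp add: b inner_axis)
  also have "\<dots> \<in> borel_measurable M" using assms by (intro borel_measurable_inner) auto
  finally show "(\<lambda>z. (\<chi> k. f k z) \<bullet> b) \<in> borel_measurable M" .
qed

lemma borel_measurable_det:
  fixes A :: "'a \<Rightarrow> real^'n::finite^'n"
  assumes "\<And>i j. (\<lambda>z. A z $ i $ j) \<in> borel_measurable M"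
  shows "(\<lambda>z. det (A z)) \<in> borel_measurable M"
  unfolding det_def using assms by measurable

lemma matrix_inv_nonsing:
  fixes S :: "real^'n::finite^'n"
  assumes "det S = 0"
  shows "matrix_inv S = (SOME A'. False)"
proof -
  have "\<not> invertible S" using assms invertible_det_nz by blast
  then have "(\<lambda>A'. S ** A' = mat 1 \<and> A' ** S = mat 1) = (\<lambda>_. False)"
    by (auto simp: invertible_def fun_eq_iff)
  then show ?thesis unfolding matrix_inv_def by simp
qed

lemma matrix_inv_mult_formula:
  fixes S :: "real^'n::finite^'n"
  shows "matrix_inv S *v y = (if det S = 0 then (SOME A'. False) *v y
           else (\<chi> k. det (\<chi> i j. if j = k then y$i else S$i$j) / det S))"
proof (cases "det S = 0")
  case True then show ?thesis by (simp add: matrix_inv_nonsing)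
next
  case False
  then have "invertible S" using invertible_det_nz by blast
  then have ex: "\<exists>A'. S ** A' = mat 1 \<and> A' ** S = mat 1" by (simp add: invertible_def)
  have "S ** matrix_inv S = mat 1" unfolding matrix_inv_def using someI_ex[OF ex] by blast
  then have "S *v (matrix_inv S *v y) = y" by (simp add: matrix_vector_mul_assoc)
  then show ?thesis using cramer[OF False, of "matrix_inv S *v y" y] False by simp
qed

lemma borel_measurable_matrix_inv_mult:
  fixes S :: "'a \<Rightarrow> real^'n::finite^'n" and y :: "'a \<Rightarrow> real^'n"
  assumes S: "S \<in> borel_measurable M" and y: "y \<in> borel_measurable M"
  shows "(\<lambda>z. matrix_inv (S z) *v y z) \<in> borel_measurable M"
proof -
  have Sij: "(\<lambda>z. S z $ i $ j) \<in> borel_measurable M" for i j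
    using S by (intro borel_measurable_vec_nth)
  have yi: "(\<lambda>z. y z $ i) \<in> borel_measurable M" for i
    using y by (intro borel_measurable_vec_nth)
  have d: "(\<lambda>z. det (S z)) \<in> borel_measurable M" by (rule borel_measurable_det[OF Sij])
  have dk: "(\<lambda>z. det (\<chi> i j. if j = k then y z $ i else S z $ i $ j)) \<in> borel_measurable M" for k
  proof (rule borel_measurable_det)
    fix i j
    show "(\<lambda>z. (\<chi> i j. if j = k then y z $ i else S z $ i $ j) $ i $ j) \<in> borel_measurable M"
      using Sij yi by (cases "j = k") simp_all
  qed
  have c: "(\<lambda>z. (SOME A'::real^'n^'n. False) *v y z) \<in> borel_measurable M"
    by (rule borel_measurable_continuous_on[OF continuous_on_mat_vec y])
  have f: "(\<lambda>z. \<chi> k. det (\<chi> i j. if j = k then y z $ i else S z $ i $ j) / det (S z)) \<in> borel_measurable M"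
    by (rule borel_measurable_vec_lambda) (intro borel_measurable_divide dk d)
  show ?thesis unfolding matrix_inv_mult_formula
    by (rule measurable_If[OF c f]) (use d in measurable)
qed

lemma borel_measurable_mvn_density_comp:
  fixes S :: "'a \<Rightarrow> real^'n::finite^'n" and y :: "'a \<Rightarrow> real^'n"
  assumes S: "S \<in> borel_measurable M" and y: "y \<in> borel_measurable M"
  shows "(\<lambda>z. mvn_density (S z) (y z)) \<in> borel_measurable M"
proof -
  have Sij: "(\<lambda>z. S z $ i $ j) \<in> borel_measurable M" for i j
    using S by (intro borel_measurable_vec_nth)
  have d: "(\<lambda>z. det (S z)) \<in> borel_measurable M" by (rule borel_measurable_det[OF Sij])
  have q: "(\<lambda>z. y z \<bullet> (matrix_inv (S z) *v y z)) \<in> borel_measurable M"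
    by (intro borel_measurable_inner y borel_measurable_matrix_inv_mult S)
  show ?thesis unfolding mvn_density_def using q d by measurable
qed

lemma borel_measurable_Sigma_rho:
  assumes "f \<in> borel_measurable M"
  shows "(\<lambda>z. Sigma_rho (f z) :: real^'n::finite^'n) \<in> borel_measurable M"
  unfolding Sigma_rho_def
  by (intro borel_measurable_vec_lambda) (use assms in measurable)



lemma PiM_density:
  fixes N :: "'i \<Rightarrow> 'a measure" and f :: "'i \<Rightarrow> 'a \<Rightarrow> ennreal"
  assumes fin: "finite I" and sf: "\<And>i. sigma_finite_measure (N i)"
    and fm[measurable]: "\<And>i. f i \<in> borel_measurable (N i)"
    and ff: "\<And>i x. f i x < \<infinity>"
  shows "PiM I (\<lambda>i. density (N i) (f i)) = density (PiM I N) (\<lambda>x. \<Prod>i\<in>I. f i (x i))"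
proof -
  interpret N: product_sigma_finite N by (simp add: product_sigma_finite_def sf)
  have sfd: "sigma_finite_measure (density (N i) (f i))" for i
  proof -
    show ?thesis using ff[of i]
      by (subst sigma_finite_measure.sigma_finite_iff_density_finite[OF sf]) (auto simp: less_top)
  qed
  interpret D: product_sigma_finite "\<lambda>i. density (N i) (f i)"
    by (simp add: product_sigma_finite_def sfd)
  have dm: "(\<lambda>x. \<Prod>i\<in>I. f i (x i)) \<in> borel_measurable (PiM I N)" by measurable
  show ?thesis
  proof (rule D.PiM_eqI[OF fin, symmetric])
    show "sets (density (PiM I N) (\<lambda>x. \<Prod>i\<in>I. f i (x i))) = sets (PiM I (\<lambda>i. density (N i) (f i)))"
      unfolding sets_density by (rule sets_PiM_cong) auto
  next
    fix A assume A: "\<And>i. i \<in> I \<Longrightarrow> A i \<in> sets (density (N i) (f i))"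
    then have A': "\<And>i. i \<in> I \<Longrightarrow> A i \<in> sets (N i)" by simp
    have PA: "PiE I A \<in> sets (PiM I N)" by (rule sets_PiM_I_finite[OF fin A'])
    have "emeasure (density (PiM I N) (\<lambda>x. \<Prod>i\<in>I. f i (x i))) (PiE I A)
        = (\<integral>\<^sup>+ x. (\<Prod>i\<in>I. f i (x i)) * indicator (PiE I A) x \<partial>PiM I N)"
      by (rule emeasure_density[OF dm PA])
    also have "\<dots> = (\<integral>\<^sup>+ x. (\<Prod>i\<in>I. f i (x i) * indicator (A i) (x i)) \<partial>PiM I N)"
    proof (rule nn_integral_cong)
      fix x assume x: "x \<in> space (PiM I N)"
      have "indicator (PiE I A) x = (\<Prod>i\<in>I. indicator (A i) (x i) :: ennreal)"
      proof -
        have iff: "x \<in> PiE I A \<longleftrightarrow> (\<forall>i\<in>I. x i \<in> A i)" using x by (auto simp: space_PiM PiE_iff)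
        show ?thesis
        proof (cases "\<forall>i\<in>I. x i \<in> A i")
          case True
          then show ?thesis using iff by (simp add: indicator_def)
        next
          case False
          then obtain i where "i \<in> I" "x i \<notin> A i" by blast
          then have "(\<Prod>i\<in>I. indicator (A i) (x i) :: ennreal) = 0"
            using fin by (intro prod_zero) (auto intro!: bexI[of _ i] simp: indicator_def)
          then show ?thesis using iff False by (simp add: indicator_def)
        qed
      qed
      then show "(\<Prod>i\<in>I. f i (x i)) * indicator (PiE I A) x = (\<Prod>i\<in>I. f i (x i) * indicator (A i) (x i))"
        by (simp add: prod.distrib)
    qed
    also have "\<dots> = (\<Prod>i\<in>I. \<integral>\<^sup>+ y. f i y * indicator (A i) y \<partial>N i)"
      by (rule N.product_nn_integral_prod[OF fin]) (use A' in measurable)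
    also have "\<dots> = (\<Prod>i\<in>I. emeasure (density (N i) (f i)) (A i))"
      by (rule prod.cong[OF refl]) (rule emeasure_density[symmetric], simp, rule A')
    finally show "emeasure (density (PiM I N) (\<lambda>x. \<Prod>i\<in>I. f i (x i))) (PiE I A) = (\<Prod>i\<in>I. emeasure (density (N i) (f i)) (A i))" .
  qed
qed



definition Sm :: "real \<Rightarrow> real \<Rightarrow> int \<Rightarrow> int \<Rightarrow> real^'k::finite^'k" where
  "Sm \<rho> \<theta> bi t = (if t = bi then (1 / (1 - \<theta>\<^sup>2)) *\<^sub>R Sigma_rho \<rho> else Sigma_rho \<rho>)"

definition Qm :: "'a set \<Rightarrow> ('a \<Rightarrow> int) \<Rightarrow> ('a \<Rightarrow> int) \<Rightarrow> ('a \<Rightarrow> int \<Rightarrow> real^'k::finite) measure" where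
  "Qm N b e = PiM N (\<lambda>i. PiM {b i..e i} (\<lambda>t. lborel))"

definition Dens :: "'a set \<Rightarrow> ('a \<Rightarrow> int) \<Rightarrow> ('a \<Rightarrow> int) \<Rightarrow> real \<Rightarrow> real \<Rightarrow> ('a \<Rightarrow> int \<Rightarrow> real^'k::finite) \<Rightarrow> ennreal" where
  "Dens N b e \<rho> \<theta> x = (\<Prod>i\<in>N. \<Prod>t\<in>{b i..e i}. ennreal (mvn_density (Sm \<rho> \<theta> (b i) t :: real^'k^'k) (x i t)))"

lemma psf_lborel: "product_sigma_finite (\<lambda>_. lborel :: (real^'k::finite) measure)"
  by (simp add: product_sigma_finite_def sigma_finite_lborel)

lemma actor_innov_density:
  "actor_innov \<rho> \<theta> bi ei = density (PiM {bi..ei} (\<lambda>t. lborel))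
     (\<lambda>y. \<Prod>t\<in>{bi..ei}. ennreal (mvn_density (Sm \<rho> \<theta> bi t :: real^'k::finite^'k) (y t)))"
proof -
  have "actor_innov \<rho> \<theta> bi ei = PiM {bi..ei} (\<lambda>t. density lborel (\<lambda>y. ennreal (mvn_density (Sm \<rho> \<theta> bi t :: real^'k::finite^'k) y)))"
    unfolding actor_innov_def by (intro PiM_cong refl) (simp add: Sm_def mvn_def)
  also have "\<dots> = density (PiM {bi..ei} (\<lambda>t. lborel))
     (\<lambda>y. \<Prod>t\<in>{bi..ei}. ennreal (mvn_density (Sm \<rho> \<theta> bi t :: real^'k::finite^'k) (y t)))"
    by (rule PiM_density) (auto simp: sigma_finite_lborel)
  finally show ?thesis .
qed

lemma latent_density:
  assumes fin: "finite N"
  shows "latent_measure N b e \<rho> \<theta> = density (Qm N b e) (Dens N b e \<rho> \<theta> :: ('a \<Rightarrow> int \<Rightarrow> real^'k::finite) \<Rightarrow> ennreal)"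
proof -
  have "latent_measure N b e \<rho> \<theta> = PiM N (\<lambda>i. density (PiM {b i..e i} (\<lambda>t. lborel))
     (\<lambda>y. \<Prod>t\<in>{b i..e i}. ennreal (mvn_density (Sm \<rho> \<theta> (b i) t :: real^'k::finite^'k) (y t))))"
    unfolding latent_measure_def by (simp add: actor_innov_density)
  also have "\<dots> = density (Qm N b e) (Dens N b e \<rho> \<theta>)"
    unfolding Qm_def Dens_def
  proof (rule PiM_density[OF fin])
    show "sigma_finite_measure (PiM {b i..e i} (\<lambda>t. lborel :: (real^'k) measure))" for i
      by (rule product_sigma_finite.sigma_finite[OF psf_lborel]) simp
    show "(\<lambda>y. \<Prod>t\<in>{b i..e i}. ennreal (mvn_density (Sm \<rho> \<theta> (b i) t :: real^'k::finite^'k) (y t)))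
           \<in> borel_measurable (PiM {b i..e i} (\<lambda>t. lborel))" for i
      by measurable
    show "(\<Prod>t\<in>{b i..e i}. ennreal (mvn_density (Sm \<rho> \<theta> (b i) t :: real^'k::finite^'k) (y t))) < \<infinity>" for i y
      by (simp add: less_top[symmetric] ennreal_prod_eq_top)
  qed
  finally show ?thesis .
qed



lemma borel_measurable_Sm:
  assumes r: "r \<in> borel_measurable M" and th: "th \<in> borel_measurable M"
  shows "(\<lambda>z. Sm (r z) (th z) bi t :: real^'k::finite^'k) \<in> borel_measurable M"
proof (cases "t = bi")
  case True
  have "(\<lambda>z. (1 / (1 - (th z)\<^sup>2)) *\<^sub>R (Sigma_rho (r z) :: real^'k^'k)) \<in> borel_measurable M"
    by (intro borel_measurable_scaleR borel_measurable_Sigma_rho r) (use th in measurable)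
  then show ?thesis using True by (simp add: Sm_def)
next
  case False
  then show ?thesis by (simp add: Sm_def borel_measurable_Sigma_rho r)
qed

lemma sets_latent_Qm: "sets (latent_measure N b e \<rho> \<theta> :: ('a \<Rightarrow> int \<Rightarrow> real^'k::finite) measure) = sets (Qm N b e)"
  unfolding latent_measure_def Qm_def actor_innov_def
  by (rule sets_PiM_cong[OF refl], rule sets_PiM_cong[OF refl], simp add: mvn_def)

lemma space_latent_Qm: "space (latent_measure N b e \<rho> \<theta> :: ('a \<Rightarrow> int \<Rightarrow> real^'k::finite) measure) = space (Qm N b e)"
  by (rule sets_eq_imp_space_eq[OF sets_latent_Qm])

lemma measurable_comp2:
  assumes "i \<in> N" "t \<in> {b i..e i}" and sQ: "f \<in> measurable Z (PiM N (\<lambda>i. PiM {b i..e i} (\<lambda>t. lborel :: (real^'k::finite) measure)))"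
  shows "(\<lambda>x. f x i t) \<in> borel_measurable Z"
proof -
  have "(\<lambda>z. f z i) \<in> measurable Z (PiM {b i..e i} (\<lambda>t. lborel :: (real^'k) measure))"
    by (rule measurable_compose[OF sQ measurable_component_singleton[OF assms(1)]])
  then have "(\<lambda>z. f z i t) \<in> measurable Z (lborel :: (real^'k) measure)"
    by (rule measurable_compose[OF _ measurable_component_singleton[OF assms(2)]])
  then show ?thesis by simp
qed

lemma Dens_measurable:
  assumes sQ: "f \<in> measurable Z (PiM N (\<lambda>i. PiM {b i..e i} (\<lambda>t. lborel :: (real^'k::finite) measure)))"
    and r: "r \<in> borel_measurable Z" and th: "th \<in> borel_measurable Z"
  shows "(\<lambda>z. Dens N b e (r z) (th z) (f z) :: ennreal) \<in> borel_measurable Z"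
  unfolding Dens_def
  by (intro borel_measurable_prod_ennreal measurable_compose[OF _ measurable_ennreal] borel_measurable_mvn_density_comp
        borel_measurable_Sm r th measurable_comp2[OF _ _ sQ]) auto

lemma joint_measurable:
  assumes fin: "finite N"
  shows "(\<lambda>(\<rho>, \<theta>). measure (latent_measure N b e \<rho> \<theta> :: ('a \<Rightarrow> int \<Rightarrow> real^'k::finite) measure)
            {x \<in> space (latent_measure N b e \<rho> \<theta>). po_series N b e B E \<theta> x = h})
         \<in> borel_measurable (borel \<Otimes>\<^sub>M borel)"
proof -
  let ?Q = "Qm N b e :: ('a \<Rightarrow> int \<Rightarrow> real^'k) measure"
  let ?Ev = "\<lambda>\<theta>. {x \<in> space ?Q. po_series N b e B E \<theta> x = h}"
  have sfQ: "sigma_finite_measure ?Q"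
  proof -
    interpret PP: product_sigma_finite "\<lambda>i. PiM {b i..e i} (\<lambda>t. lborel :: (real^'k) measure)"
      by (simp add: product_sigma_finite_def product_sigma_finite.sigma_finite[OF psf_lborel])
    show ?thesis unfolding Qm_def by (rule PP.sigma_finite[OF fin])
  qed
  have Ev_sets: "?Ev \<theta> \<in> sets ?Q" for \<theta>
  proof -
    have "Measurable.pred ?Q (\<lambda>z. po_series N b e B E \<theta> (id z) = h)"
      unfolding Qm_def by (rule pred_po_series_eq[OF fin]) auto
    then show ?thesis by (simp add: pred_def)
  qed
  have eq: "measure (latent_measure N b e \<rho> \<theta> :: ('a \<Rightarrow> int \<Rightarrow> real^'k::finite) measure)
            {x \<in> space (latent_measure N b e \<rho> \<theta>). po_series N b e B E \<theta> x = h}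
          = enn2real (\<integral>\<^sup>+ x. Dens N b e \<rho> \<theta> x * indicator (?Ev \<theta>) x \<partial>?Q)" for \<rho> \<theta>
  proof -
    have dm: "Dens N b e \<rho> \<theta> \<in> borel_measurable ?Q"
      using Dens_measurable[of "\<lambda>x. x" ?Q N b e "\<lambda>_. \<rho>" "\<lambda>_. \<theta>"] unfolding Qm_def by simp
    have "{x \<in> space (latent_measure N b e \<rho> \<theta> :: ('a \<Rightarrow> int \<Rightarrow> real^'k::finite) measure). po_series N b e B E \<theta> x = h} = ?Ev \<theta>"
      by (simp only: space_latent_Qm)
    then show ?thesis
      apply (simp only: measure_def latent_density[OF fin])
      apply (subst emeasure_density[OF dm Ev_sets])
      apply (rule refl)
      done
  qed
  let ?M1 = "borel \<Otimes>\<^sub>M borel :: (real \<times> real) measure"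
  have f: "(\<lambda>z. Dens N b e (fst (fst z)) (snd (fst z)) (snd z) * indicator (?Ev (snd (fst z))) (snd z))
           \<in> borel_measurable (?M1 \<Otimes>\<^sub>M ?Q)"
  proof (intro borel_measurable_times_ennreal)
    have sQ: "snd \<in> measurable (?M1 \<Otimes>\<^sub>M ?Q) (PiM N (\<lambda>i. PiM {b i..e i} (\<lambda>t. lborel :: (real^'k) measure)))"
      unfolding Qm_def by (rule measurable_snd)
    show "(\<lambda>z. Dens N b e (fst (fst z)) (snd (fst z)) (snd z)) \<in> borel_measurable (?M1 \<Otimes>\<^sub>M ?Q)"
      by (rule Dens_measurable[OF sQ]) measurable
    have pr: "Measurable.pred (?M1 \<Otimes>\<^sub>M ?Q) (\<lambda>z. po_series N b e B E (snd (fst z)) (snd z) = h)"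
      by (rule pred_po_series_eq[OF fin sQ]) (simp, measurable)
    have ifm: "(\<lambda>z. if po_series N b e B E (snd (fst z)) (snd z) = h then 1 else (0::ennreal)) \<in> borel_measurable (?M1 \<Otimes>\<^sub>M ?Q)"
      using pr unfolding pred_def by (intro measurable_If measurable_const) simp_all
    have eqi: "indicator (?Ev (snd (fst z))) (snd z) = (if po_series N b e B E (snd (fst z)) (snd z) = h then 1 else (0::ennreal))"
      if "z \<in> space (?M1 \<Otimes>\<^sub>M ?Q)" for z
    proof -
      have "snd z \<in> space ?Q" using that by (auto simp: space_pair_measure)
      then show ?thesis by (simp add: indicator_def)
    qed
    show "(\<lambda>z. indicator (?Ev (snd (fst z))) (snd z) :: ennreal) \<in> borel_measurable (?M1 \<Otimes>\<^sub>M ?Q)"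
      using ifm by (subst measurable_cong[OF eqi]) simp_all
  qed
  have "(\<lambda>p. \<integral>\<^sup>+ x. Dens N b e (fst p) (snd p) x * indicator (?Ev (snd p)) x \<partial>?Q) \<in> borel_measurable ?M1"
    using sigma_finite_measure.borel_measurable_nn_integral_fst[OF sfQ f] by simp
  then have "(\<lambda>p. enn2real (\<integral>\<^sup>+ x. Dens N b e (fst p) (snd p) x * indicator (?Ev (snd p)) x \<partial>?Q)) \<in> borel_measurable ?M1"
    by (rule borel_measurable_enn2real)
  then show ?thesis by (simp add: eq case_prod_beta')
qed



lemma actor_innov_prob:
  assumes r: "0 < \<rho>" "\<rho> < 1" and t: "0 < \<theta>" "\<theta> < 1"
  shows "prob_space (actor_innov \<rho> \<theta> bi ei :: (int \<Rightarrow> real^'k::finite) measure)"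
  unfolding actor_innov_def
proof (rule prob_space_PiM)
  fix i
  have th: "\<theta>\<^sup>2 < 1" using t by (simp add: power_less_one_iff abs_less_iff)
  have p1: "prob_space (mvn ((1 / (1 - \<theta>\<^sup>2)) *\<^sub>R Sigma_rho \<rho>) :: (real^'k) measure)"
    by (rule mvn_Sigma_prob) (use r th in auto)
  have p2: "prob_space (mvn (Sigma_rho \<rho>) :: (real^'k) measure)"
    using mvn_Sigma_prob[of 1 \<rho>] r by simp
  show "prob_space (if i = bi then mvn ((1 / (1 - \<theta>\<^sup>2)) *\<^sub>R Sigma_rho \<rho>) else mvn (Sigma_rho \<rho>) :: (real^'k) measure)"
    using p1 p2 by simp
qed

lemma sets_unif01: "sets unif01 = sets borel"
  by (simp add: unif01_def)

lemma prob_unif01: "prob_space unif01"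
  unfolding unif01_def by (rule prob_space_uniform_measure) simp_all

lemma AE_unif01: "AE \<theta> in unif01. 0 < \<theta> \<and> \<theta> < 1"
  unfolding unif01_def by (rule AE_uniform_measureI) auto

lemma sets_beta: "sets (beta_measure a c) = sets borel"
  by (simp add: beta_measure_def)

lemma borel_measurable_beta_density[measurable]: "(\<lambda>x. ennreal (beta_density a c x)) \<in> borel_measurable borel"
  unfolding beta_density_def by measurable

lemma AE_beta: "AE \<rho> in beta_measure a c. 0 < \<rho> \<and> \<rho> < 1"
  unfolding beta_measure_def
  by (subst AE_density) (auto simp: beta_density_def split: if_splits)

lemma finite_beta:
  assumes "\<gamma> > 0"
  shows "finite_measure (beta_measure 1 \<gamma>)"
proof
  let ?f = "\<lambda>t::real. t powr (1 - 1) * (1 - t) powr (\<gamma> - 1) * (1 / Beta 1 \<gamma>)"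
  have Bp: "Beta 1 \<gamma> > 0" using assms by (simp add: Beta_def Gamma_real_pos)
  have hi: "(?f has_integral (Beta 1 \<gamma> * (1 / Beta 1 \<gamma>))) {0<..<1}"
    using has_integral_Beta_real[of 1 \<gamma>] assms
    by (intro has_integral_mult_left) (simp add: has_integral_Icc_iff_Ioo)
  have "emeasure (beta_measure 1 \<gamma>) (space (beta_measure 1 \<gamma>)) = (\<integral>\<^sup>+ x. ennreal (beta_density 1 \<gamma> x) \<partial>lborel)"
    by (simp add: beta_measure_def emeasure_density[of _ _ UNIV])
  also have "\<dots> = (\<integral>\<^sup>+ x. ennreal (?f x) * indicator {0<..<1} x \<partial>lborel)"
    by (rule nn_integral_cong) (auto simp: beta_density_def indicator_def)
  also have "\<dots> = ennreal (Beta 1 \<gamma> * (1 / Beta 1 \<gamma>))"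
    by (rule nn_integral_has_integral_lebesgue'[OF _ hi]) (use Bp in auto)
  finally show "emeasure (beta_measure 1 \<gamma>) (space (beta_measure 1 \<gamma>)) \<noteq> \<infinity>" by simp
qed



definition Fn :: "'k::finite itself \<Rightarrow> 'a set \<Rightarrow> ('a \<Rightarrow> int) \<Rightarrow> ('a \<Rightarrow> int) \<Rightarrow> int \<Rightarrow> int
    \<Rightarrow> (int \<Rightarrow> ('a \<times> 'a) set) \<Rightarrow> real \<Rightarrow> real \<Rightarrow> real" where
  "Fn K N b e B E h \<rho> \<theta> = measure (latent_measure N b e \<rho> \<theta> :: ('a \<Rightarrow> int \<Rightarrow> real^'k) measure)
          {x \<in> space (latent_measure N b e \<rho> \<theta>). po_series N b e B E \<theta> x = h}"

lemma prior_prob_Fn: "prior_prob K N b e B E \<gamma> h = (\<integral>\<rho>. (\<integral>\<theta>. Fn K N b e B E h \<rho> \<theta> \<partial>unif01) \<partial>beta_measure 1 \<gamma>)"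
  by (simp add: prior_prob_def Fn_def)

lemma Fn_joint: "finite N \<Longrightarrow> (\<lambda>(\<rho>, \<theta>). Fn K N b e B E h \<rho> \<theta>) \<in> borel_measurable (borel \<Otimes>\<^sub>M borel)"
  unfolding Fn_def by (rule joint_measurable)

lemma Fn_meas_theta:
  assumes "finite N"
  shows "(\<lambda>\<theta>. Fn K N b e B E h \<rho> \<theta>) \<in> borel_measurable unif01"
proof -
  have "(\<lambda>\<theta>. (\<lambda>(\<rho>, \<theta>). Fn K N b e B E h \<rho> \<theta>) (\<rho>, \<theta>)) \<in> borel_measurable borel"
    by (rule measurable_compose_Pair1[OF _ Fn_joint[OF assms]]) simp
  then show ?thesis by (simp add: measurable_cong_sets[OF sets_unif01 refl])
qed

lemma Fn_meas_rho:
  assumes "finite N"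
  shows "(\<lambda>\<rho>. \<integral>\<theta>. Fn K N b e B E h \<rho> \<theta> \<partial>unif01) \<in> borel_measurable (beta_measure 1 \<gamma>)"
proof -
  interpret U: prob_space unif01 by (rule prob_unif01)
  have "(\<lambda>(\<rho>, \<theta>). Fn K N b e B E h \<rho> \<theta>) \<in> borel_measurable (beta_measure 1 \<gamma> \<Otimes>\<^sub>M unif01)"
    using Fn_joint[OF assms]
    by (simp add: measurable_cong_sets[OF sets_pair_measure_cong[OF sets_beta sets_unif01] refl])
  then show ?thesis by (rule U.borel_measurable_lebesgue_integral)
qed

lemma Fn_bound:
  fixes K :: "'k::finite itself" and N :: "'a set"
  assumes "0 < \<rho>" "\<rho> < 1" "0 < \<theta>" "\<theta> < 1"
  shows "0 \<le> Fn K N b e B E h \<rho> \<theta> \<and> Fn K N b e B E h \<rho> \<theta> \<le> 1"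
proof -
  have "prob_space (latent_measure N b e \<rho> \<theta> :: ('a \<Rightarrow> int \<Rightarrow> real^'k::finite) measure)"
    unfolding latent_measure_def by (rule prob_space_PiM) (rule actor_innov_prob[OF assms])
  then show ?thesis unfolding Fn_def by (simp add: prob_space.prob_le_1)
qed

lemma Fn_integrable_theta:
  assumes "finite N" "0 < \<rho>" "\<rho> < 1"
  shows "integrable unif01 (\<lambda>\<theta>. Fn K N b e B E h \<rho> \<theta>)"
proof -
  interpret U: prob_space unif01 by (rule prob_unif01)
  show ?thesis
  proof (rule U.integrable_const_bound[where B=1])
    show "AE \<theta> in unif01. norm (Fn K N b e B E h \<rho> \<theta>) \<le> 1"
    proof -
      have fb: "\<And>\<theta>. 0 < \<theta> \<Longrightarrow> \<theta> < 1 \<Longrightarrow> 0 \<le> Fn K N b e B E h \<rho> \<theta> \<and> Fn K N b e B E h \<rho> \<theta> \<le> 1"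
        by (rule Fn_bound) (use assms in auto)
      show ?thesis using AE_unif01 by eventually_elim (use fb in auto)
    qed
  qed (rule Fn_meas_theta[OF assms(1)])
qed

lemma G_bound:
  assumes "finite N" "0 < \<rho>" "\<rho> < 1"
  shows "norm (\<integral>\<theta>. Fn K N b e B E h \<rho> \<theta> \<partial>unif01) \<le> 1"
proof -
  interpret U: prob_space unif01 by (rule prob_unif01)
  have i: "integrable unif01 (\<lambda>\<theta>. Fn K N b e B E h \<rho> \<theta>)" by (rule Fn_integrable_theta[OF assms])
  have fb: "\<And>\<theta>. 0 < \<theta> \<Longrightarrow> \<theta> < 1 \<Longrightarrow> 0 \<le> Fn K N b e B E h \<rho> \<theta> \<and> Fn K N b e B E h \<rho> \<theta> \<le> 1"
    by (rule Fn_bound) (use assms in auto)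
  have "(\<integral>\<theta>. Fn K N b e B E h \<rho> \<theta> \<partial>unif01) \<le> 1"
    by (rule U.integral_le_const[OF i]) (use AE_unif01 in \<open>eventually_elim, use fb in auto\<close>)
  moreover have "0 \<le> (\<integral>\<theta>. Fn K N b e B E h \<rho> \<theta> \<partial>unif01)"
    by (rule integral_nonneg_AE) (use AE_unif01 in \<open>eventually_elim, use fb in auto\<close>)
  ultimately show ?thesis by simp
qed

lemma G_integrable:
  assumes "finite N" "\<gamma> > 0"
  shows "integrable (beta_measure 1 \<gamma>) (\<lambda>\<rho>. \<integral>\<theta>. Fn K N b e B E h \<rho> \<theta> \<partial>unif01)"
proof -
  interpret Bt: finite_measure "beta_measure 1 \<gamma>" by (rule finite_beta[OF assms(2)])
  show ?thesis
  proof (rule Bt.integrable_const_bound[where B=1])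
    show "AE \<rho> in beta_measure 1 \<gamma>. norm (\<integral>\<theta>. Fn K N b e B E h \<rho> \<theta> \<partial>unif01) \<le> 1"
      using AE_beta by eventually_elim (use G_bound assms in auto)
  qed (rule Fn_meas_rho[OF assms(1)])
qed



lemma main_identity:
  fixes K :: "'k::finite itself" and M :: "'a set"
  assumes fin: "finite M" and \<gamma>: "\<gamma> > 0"
  shows "prior_prob K (M - {j}) b e B E \<gamma> g =
         (\<Sum>h \<in> HBE M b e B E. (if g = delete_actor M b e B E j h then 1 else 0) * prior_prob K M b e B E \<gamma> h)"
proof -
  define c where "c h = (if g = delete_actor M b e B E j h then 1 else 0 :: real)" for h
  define H where "H = HBE M b e B E"
  have finH: "finite H" unfolding H_def by (rule finite_HBE[OF fin])
  have finJ: "finite (M - {j})" using fin by simp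
  let ?bt = "beta_measure 1 \<gamma>"
  let ?G = "\<lambda>N h \<rho>. \<integral>\<theta>. Fn K N b e B E h \<rho> \<theta> \<partial>unif01"
  have Gi: "integrable ?bt (?G M h)" for h by (rule G_integrable[OF fin \<gamma>])
  have "(\<Sum>h\<in>H. c h * prior_prob K M b e B E \<gamma> h) = (\<Sum>h\<in>H. \<integral>\<rho>. c h * ?G M h \<rho> \<partial>?bt)"
    unfolding prior_prob_Fn by (rule sum.cong[OF refl]) (simp add: Gi)
  also have "\<dots> = (\<integral>\<rho>. (\<Sum>h\<in>H. c h * ?G M h \<rho>) \<partial>?bt)"
    by (rule Bochner_Integration.integral_sum[symmetric]) (simp add: Gi)
  finally have RHS: "(\<Sum>h\<in>H. c h * prior_prob K M b e B E \<gamma> h) = (\<integral>\<rho>. (\<Sum>h\<in>H. c h * ?G M h \<rho>) \<partial>?bt)" .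
  have AEeq: "AE \<rho> in ?bt. ?G (M - {j}) g \<rho> = (\<Sum>h\<in>H. c h * ?G M h \<rho>)"
    using AE_beta
  proof eventually_elim
    fix \<rho> :: real assume r: "0 < \<rho> \<and> \<rho> < 1"
    have Fi: "integrable unif01 (\<lambda>\<theta>. Fn K M b e B E h \<rho> \<theta>)" for h
      by (rule Fn_integrable_theta[OF fin]) (use r in auto)
    have "(\<Sum>h\<in>H. c h * ?G M h \<rho>) = (\<Sum>h\<in>H. \<integral>\<theta>. c h * Fn K M b e B E h \<rho> \<theta> \<partial>unif01)"
      by (rule sum.cong[OF refl]) (simp add: Fi)
    also have "\<dots> = (\<integral>\<theta>. (\<Sum>h\<in>H. c h * Fn K M b e B E h \<rho> \<theta>) \<partial>unif01)"
      by (rule Bochner_Integration.integral_sum[symmetric]) (simp add: Fi)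
    also have "\<dots> = ?G (M - {j}) g \<rho>"
    proof (rule integral_cong_AE)
      show "(\<lambda>\<theta>. \<Sum>h\<in>H. c h * Fn K M b e B E h \<rho> \<theta>) \<in> borel_measurable unif01"
        by (intro borel_measurable_sum borel_measurable_times borel_measurable_const Fn_meas_theta[OF fin])
      show "(\<lambda>\<theta>. Fn K (M - {j}) b e B E g \<rho> \<theta>) \<in> borel_measurable unif01"
        by (rule Fn_meas_theta[OF finJ])
      show "AE \<theta> in unif01. (\<Sum>h\<in>H. c h * Fn K M b e B E h \<rho> \<theta>) = Fn K (M - {j}) b e B E g \<rho> \<theta>"
        using AE_unif01
      proof eventually_elim
        fix \<theta> :: real assume t: "0 < \<theta> \<and> \<theta> < 1"
        have ps: "\<And>bi ei. prob_space (actor_innov \<rho> \<theta> bi ei :: (int \<Rightarrow> real^'k) measure)"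
          by (rule actor_innov_prob) (use r t in auto)
        show "(\<Sum>h\<in>H. c h * Fn K M b e B E h \<rho> \<theta>) = Fn K (M - {j}) b e B E g \<rho> \<theta>"
          unfolding Fn_def c_def H_def using fixed_identity[OF fin ps, of j b e B E g] by simp
      qed
    qed
    finally show "?G (M - {j}) g \<rho> = (\<Sum>h\<in>H. c h * ?G M h \<rho>)" by simp
  qed
  have "prior_prob K (M - {j}) b e B E \<gamma> g = (\<integral>\<rho>. ?G (M - {j}) g \<rho> \<partial>?bt)"
    by (rule prior_prob_Fn)
  also have "\<dots> = (\<integral>\<rho>. (\<Sum>h\<in>H. c h * ?G M h \<rho>) \<partial>?bt)"
  proof (rule integral_cong_AE)
    show "(\<lambda>\<rho>. ?G (M - {j}) g \<rho>) \<in> borel_measurable ?bt" by (rule Fn_meas_rho[OF finJ])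
    show "(\<lambda>\<rho>. \<Sum>h\<in>H. c h * ?G M h \<rho>) \<in> borel_measurable ?bt"
      by (intro borel_measurable_sum borel_measurable_times borel_measurable_const Fn_meas_rho[OF fin])
  qed (rule AEeq)
  also have "\<dots> = (\<Sum>h\<in>H. c h * prior_prob K M b e B E \<gamma> h)" by (rule RHS[symmetric])
  finally show ?thesis by (simp add: c_def H_def)
qed


theorem proposition1:
  fixes M :: "'a set" and b e :: "'a \<Rightarrow> int" and B E :: int and \<gamma> :: real and j :: 'a
    and g :: "int \<Rightarrow> ('a \<times> 'a) set"
  assumes "finite M" and "j \<in> M" and "\<gamma> > 0"
    and "\<forall>i \<in> M. B \<le> b i \<and> b i \<le> e i \<and> e i \<le> E"
    and "g \<in> HBE (M - {j}) b e B E"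
  shows "prior_prob TYPE('k::finite) (M - {j}) b e B E \<gamma> g =
         (\<Sum>h \<in> HBE M b e B E.
            (if g = delete_actor M b e B E j h then 1 else 0) * prior_prob TYPE('k) M b e B E \<gamma> h)"
  by (rule main_identity) (use assms in auto)

end
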